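(* Let $\mathcal{A},\hat{\mathcal{A}}$ be nonnegative combinatorially symmetric weakly irreducible tensors of order $m$ and dimension $n$ such that $\mathrm{sp}(\hat{\mathcal{A}})\le\mathrm{sp}(\mathcal{A})$. Then $\mathbb{P}\mathbb{S}_0(\mathcal{A})$ is a $\mathbb{Z}_m$-submodule of $\mathbb{P}\mathbb{S}_0(\hat{\mathcal{A}})$. Consequently $s(\mathcal{A})\mid s(\hat{\mathcal{A}})$ and $\gamma(\mathcal{A})\le\gamma(\hat{\mathcal{A}})$.
   Context: Tensors: order $m$, dimension $n$, entries $a_{i_1\cdots i_m}$; $\mathrm{sp}(\mathcal{A})$ is the $0/1$ tensor marking nonzero entries, compared entrywise. Eigenvectors: $\mathcal{A}x^{m-1}=\lambda x^{[m-1]}$, $x\ne0$, $(\mathcal{A}x^{m-1})_i=\sum a_{ii_2\cdots i_m}x_{i_2}\cdots x_{i_m}$; $\rho(\mathcal{A})$ spectral radius. Weakly irreducible: digraph on $[n]$ with arc $(i,j)$ whenever some $a_{ii_2\cdots i_m}\ne0$ with $j\in\{i_2,\dots,i_m\}$ is strongly connected. Combinatorially symmetric: support invariant under index permutations. Incidence matrix $B_{\mathcal{A}}$: rows indexed by $E(\mathcal{A})=\{(i_1,\dots,i_m): a_{i_1\cdots i_m}\ne0, i_1\le\dots\le i_m\}$, $b_{e,j}=|\{k:i_k=j\}|$, over $\mathbb{Z}_m$. $\mathbb{P}\mathbb{S}_0(\mathcal{A})=\{x\in\mathbb{Z}_m^n: B_{\mathcal{A}}x=0,\ x_1=0\}$.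 Stabilizing index $s(\mathcal{A})$: number of invertible diagonal $D$ with $d_{11}=1$ and $\mathcal{A}=D^{-(m-1)}\mathcal{A}D$, where $(D^{-(m-1)}\mathcal{A}D)_{i_1\cdots i_m}=d_{i_1}^{-(m-1)}a_{i_1\cdots i_m}d_{i_2}\cdots d_{i_m}$. Stabilizing dimension $\gamma(\mathcal{A})$: composition length of the $\mathbb{Z}_m$-module $\mathbb{P}\mathbb{V}_{\rho(\mathcal{A})}$ of eigenvectors for $\rho(\mathcal{A})$ normalized by $y_1=1$ (these have no zero entries), with operation $y\circ\hat y=D_yD_{\hat y}v_p$, $D_y=\mathrm{diag}(y_i/|y_i|)$, $v_p$ its positive element. *)

theory Defs
  imports Complex_Main "HOL-Library.FuncSet" "HOL-Library.Multiset"
begin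

text \<open>A tensor of order m and dimension n is a function on index lists
  (i_1,...,i_m) with entries in {1..n}; values outside are irrelevant.\<close>
type_synonym tensor = "nat list \<Rightarrow> real"

definition tidx :: "nat \<Rightarrow> nat \<Rightarrow> nat list set" where
  "tidx m n = {xs. length xs = m \<and> set xs \<subseteq> {1..n}}"

definition nonneg_tensor :: "nat \<Rightarrow> nat \<Rightarrow> tensor \<Rightarrow> bool" where
  "nonneg_tensor m n A \<longleftrightarrow> (\<forall>xs\<in>tidx m n. A xs \<ge> 0)"

definition sp_le :: "nat \<Rightarrow> nat \<Rightarrow> tensor \<Rightarrow> tensor \<Rightarrow> bool" where
  "sp_le m n Ahat A \<longleftrightarrow> (\<forall>xs\<in>tidx m n. Ahat xs \<noteq> 0 \<longrightarrow> A xs \<noteq> 0)"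

definition comb_symmetric :: "nat \<Rightarrow> nat \<Rightarrow> tensor \<Rightarrow> bool" where
  "comb_symmetric m n A \<longleftrightarrow>
     (\<forall>xs\<in>tidx m n. \<forall>ys\<in>tidx m n. mset xs = mset ys \<longrightarrow> (A xs \<noteq> 0 \<longleftrightarrow> A ys \<noteq> 0))"

definition tensor_digraph :: "nat \<Rightarrow> nat \<Rightarrow> tensor \<Rightarrow> (nat \<times> nat) set" where
  "tensor_digraph m n A =
     {(i, j). \<exists>xs\<in>tidx m n. A xs \<noteq> 0 \<and> hd xs = i \<and> j \<in> set (tl xs)}"

definition weakly_irreducible :: "nat \<Rightarrow> nat \<Rightarrow> tensor \<Rightarrow> bool" where
  "weakly_irreducible m n A \<longleftrightarrow>
     (\<forall>i\<in>{1..n}. \<forall>j\<in>{1..n}. (i, j) \<in> (tensor_digraph m n A)\<^sup>*)"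

definition tensor_apply :: "nat \<Rightarrow> nat \<Rightarrow> tensor \<Rightarrow> (nat \<Rightarrow> complex) \<Rightarrow> nat \<Rightarrow> complex" where
  "tensor_apply m n A x i =
     (\<Sum>ys\<in>tidx (m - 1) n. complex_of_real (A (i # ys)) * prod_list (map x ys))"

definition is_eigenpair :: "nat \<Rightarrow> nat \<Rightarrow> tensor \<Rightarrow> complex \<Rightarrow> (nat \<Rightarrow> complex) \<Rightarrow> bool" where
  "is_eigenpair m n A lam x \<longleftrightarrow>
     (\<exists>i\<in>{1..n}. x i \<noteq> 0) \<and>
     (\<forall>i\<in>{1..n}. tensor_apply m n A x i = lam * x i ^ (m - 1))"

definition spectral_radius :: "nat \<Rightarrow> nat \<Rightarrow> tensor \<Rightarrow> real" where
  "spectral_radius m n A = Sup {cmod lam | lam. \<exists>x. is_eigenpair m n A lam x}"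

definition edge_set :: "nat \<Rightarrow> nat \<Rightarrow> tensor \<Rightarrow> nat list set" where
  "edge_set m n A = {e\<in>tidx m n. A e \<noteq> 0 \<and> sorted e}"

definition incidence :: "nat list \<Rightarrow> nat \<Rightarrow> nat" where
  "incidence e j = count_list e j"

definition zm_vectors :: "nat \<Rightarrow> nat \<Rightarrow> (nat \<Rightarrow> nat) set" where
  "zm_vectors m n = {1..n} \<rightarrow>\<^sub>E {0..<m}"

definition PS0 :: "nat \<Rightarrow> nat \<Rightarrow> tensor \<Rightarrow> (nat \<Rightarrow> nat) set" where
  "PS0 m n A = {x\<in>zm_vectors m n.
      (\<forall>e\<in>edge_set m n A. (\<Sum>j=1..n. incidence e j * x j) mod m = 0) \<and> x 1 = 0}"

definition zm_submodule :: "nat \<Rightarrow> nat \<Rightarrow> (nat \<Rightarrow> nat) set \<Rightarrow> (nat \<Rightarrow> nat) set \<Rightarrow> bool" where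
  "zm_submodule m n S T \<longleftrightarrow> S \<subseteq> T \<and> T \<subseteq> zm_vectors m n \<and>
     (\<lambda>i\<in>{1..n}. 0) \<in> S \<and>
     (\<forall>x\<in>S. \<forall>y\<in>S. (\<lambda>i\<in>{1..n}. (x i + y i) mod m) \<in> S) \<and>
     (\<forall>k<m. \<forall>x\<in>S. (\<lambda>i\<in>{1..n}. (k * x i) mod m) \<in> S)"

definition stab_set :: "nat \<Rightarrow> nat \<Rightarrow> tensor \<Rightarrow> (nat \<Rightarrow> complex) set" where
  "stab_set m n A = {d \<in> {1..n} \<rightarrow>\<^sub>E (UNIV - {0}). d 1 = 1 \<and>
     (\<forall>xs\<in>tidx m n. complex_of_real (A xs) =
        inverse (d (hd xs)) ^ (m - 1) * complex_of_real (A xs) * prod_list (map d (tl xs)))}"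

definition stab_index :: "nat \<Rightarrow> nat \<Rightarrow> tensor \<Rightarrow> nat" where
  "stab_index m n A = card (stab_set m n A)"

definition PV :: "nat \<Rightarrow> nat \<Rightarrow> tensor \<Rightarrow> (nat \<Rightarrow> complex) set" where
  "PV m n A = {y \<in> {1..n} \<rightarrow>\<^sub>E UNIV.
      is_eigenpair m n A (complex_of_real (spectral_radius m n A)) y \<and> y 1 = 1}"

definition vpos :: "nat \<Rightarrow> nat \<Rightarrow> tensor \<Rightarrow> (nat \<Rightarrow> complex)" where
  "vpos m n A = (THE y. y \<in> PV m n A \<and> (\<forall>i\<in>{1..n}. Im (y i) = 0 \<and> Re (y i) > 0))"

definition pv_op :: "nat \<Rightarrow> nat \<Rightarrow> tensor \<Rightarrow> (nat \<Rightarrow> complex) \<Rightarrow> (nat \<Rightarrow> complex) \<Rightarrow> (nat \<Rightarrow> complex)" where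
  "pv_op m n A y z = (\<lambda>i\<in>{1..n}.
      (y i / complex_of_real (cmod (y i))) * (z i / complex_of_real (cmod (z i))) * vpos m n A i)"

text \<open>submodules of the Z_m-module (PV, pv_op) with zero vpos: subsets containing
  the zero and closed under the addition (scalar multiples are iterated sums)\<close>
definition pv_submodule :: "nat \<Rightarrow> nat \<Rightarrow> tensor \<Rightarrow> (nat \<Rightarrow> complex) set \<Rightarrow> bool" where
  "pv_submodule m n A H \<longleftrightarrow> H \<subseteq> PV m n A \<and> vpos m n A \<in> H \<and>
     (\<forall>y\<in>H. \<forall>z\<in>H. pv_op m n A y z \<in> H)"

text \<open>composition length = maximal length of a strict chain of submodules\<close>
definition stab_dim :: "nat \<Rightarrow> nat \<Rightarrow> tensor \<Rightarrow> nat" where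
  "stab_dim m n A = (GREATEST k. \<exists>H :: nat \<Rightarrow> (nat \<Rightarrow> complex) set.
      (\<forall>j\<le>k. pv_submodule m n A (H j)) \<and> (\<forall>j<k. H j \<subset> H (Suc j)))"

end

theory Submission imports Defs "HOL-Analysis.Analysis" "HOL-Algebra.Coset" begin

lemma pl_nonneg: "(\<And>j. j \<in> set ys \<Longrightarrow> 0 \<le> x j) \<Longrightarrow> 0 \<le> prod_list (map x ys :: real list)"
  by (induction ys) auto

lemma pl_pos: "(\<And>j. j \<in> set ys \<Longrightarrow> 0 < x j) \<Longrightarrow> 0 < prod_list (map x ys :: real list)"
  by (induction ys) auto

lemma pl_mono: "(\<And>j. j \<in> set ys \<Longrightarrow> 0 \<le> x j \<and> x j \<le> y j) \<Longrightarrow>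
   prod_list (map x ys :: real list) \<le> prod_list (map y ys)"
proof (induction ys)
  case (Cons a ys)
  have px: "0 \<le> prod_list (map x ys)" using Cons.prems by (intro pl_nonneg) auto
  have "prod_list (map x ys) \<le> prod_list (map y ys)" using Cons by auto
  then show ?case using Cons.prems[of a] px by (simp add: mult_mono)
qed simp

lemma pl_strict: "(\<And>j. j \<in> set ys \<Longrightarrow> 0 \<le> x j \<and> x j \<le> y j \<and> 0 < y j) \<Longrightarrow>
   (\<exists>j\<in>set ys. x j < y j) \<Longrightarrow> prod_list (map x ys :: real list) < prod_list (map y ys)"
proof (induction ys)
  case (Cons a ys)
  have ih: "prod_list (map x ys) \<le> prod_list (map y ys)" using Cons.prems(1) by (intro pl_mono) auto
  have py: "0 < prod_list (map y ys)" using Cons.prems(1) by (intro pl_pos) auto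
  have px: "0 \<le> prod_list (map x ys)" using Cons.prems(1) by (intro pl_nonneg) auto
  show ?case
  proof (cases "x a < y a")
    case True
    have "x a * prod_list (map x ys) \<le> x a * prod_list (map y ys)"
      using ih Cons.prems(1) by (intro mult_left_mono) auto
    also have "\<dots> < y a * prod_list (map y ys)" using True py by simp
    finally show ?thesis by simp
  next
    case False
    then have "\<exists>j\<in>set ys. x j < y j" using Cons.prems(2) by auto
    then have "prod_list (map x ys) < prod_list (map y ys)" using Cons by auto
    moreover have "x a * prod_list (map x ys) \<le> y a * prod_list (map x ys)"
      using Cons.prems(1) px by (intro mult_right_mono) auto
    moreover have "y a * prod_list (map x ys) < y a * prod_list (map y ys)"
      using Cons.prems(1) calculation(1) by simp
    ultimately show ?thesis by simp
  qed
qed simp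

lemma pl_scale: "prod_list (map (\<lambda>j. t * x j) ys) = t ^ length ys * prod_list (map x ys :: 'a::comm_monoid_mult list)"
  by (induction ys) (auto simp: algebra_simps)

lemma pl_one: "prod_list (map (\<lambda>_. 1::real) ys) = 1"
  by (induction ys) auto

lemma pl_one_c: "prod_list (map (\<lambda>_. 1::complex) ys) = 1"
  by (induction ys) auto

lemma pl_inverse: "prod_list (map (\<lambda>j. inverse (f j)) ys) = inverse (prod_list (map f ys :: complex list))"
  by (induction ys) (auto simp: inverse_mult_distrib)

lemma pl_mult: "prod_list (map (\<lambda>j. f j * g j) ys) = prod_list (map f ys) * prod_list (map g ys :: 'a::comm_monoid_mult list)"
  by (induction ys) (auto simp: algebra_simps)

lemma pl_cong: "(\<And>j. j \<in> set ys \<Longrightarrow> f j = g j) \<Longrightarrow> prod_list (map f ys) = prod_list (map g ys)"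
  by (metis map_cong)

lemma pl_lower: "(\<And>j. j \<in> set ys \<Longrightarrow> c \<le> x j) \<Longrightarrow> 0 \<le> c \<Longrightarrow> u \<in> set ys \<Longrightarrow>
   x u * c ^ (length ys - 1) \<le> prod_list (map x ys :: real list)"
proof (induction ys)
  case (Cons a ys)
  have cpow: "c ^ length ys \<le> prod_list (map x ys)"
  proof -
    have "prod_list (map (\<lambda>_. c) ys) \<le> prod_list (map x ys)"
      using Cons.prems by (intro pl_mono) auto
    moreover have "prod_list (map (\<lambda>_. c) ys) = c ^ length ys"
      by (induction ys) auto
    ultimately show ?thesis by simp
  qed
  show ?case
  proof (cases "u = a")
    case True
    have "c \<le> x a" using Cons.prems(1) by simp
    then have "0 \<le> x a" using Cons.prems(2) by linarith
    then show ?thesis using cpow True by (simp add: mult_left_mono)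
  next
    case False
    then have u: "u \<in> set ys" using Cons.prems by auto
    then have ne: "ys \<noteq> []" by auto
    have ih: "x u * c ^ (length ys - 1) \<le> prod_list (map x ys)" using Cons u by auto
    have "x u * c ^ (length (a # ys) - 1) = c * (x u * c ^ (length ys - 1))"
      using ne by (cases ys) (auto simp: algebra_simps)
    also have "\<dots> \<le> x a * prod_list (map x ys)"
    proof (rule mult_mono)
      show "c \<le> x a" using Cons.prems(1) by simp
      show "x u * c ^ (length ys - 1) \<le> prod_list (map x ys)" by (rule ih)
      have "c \<le> x a" using Cons.prems(1) by simp
      then show "0 \<le> x a" using Cons.prems(2) by linarith
      have "c \<le> x u" using Cons.prems(1) u by simp
      then show "0 \<le> x u * c ^ (length ys - 1)" using Cons.prems(2) by simp
    qed
    finally show ?thesis by simp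
  qed
qed simp

lemma pl_norm: "norm (prod_list (map f ys)) = prod_list (map (\<lambda>j. norm (f j :: complex)) ys)"
  by (induction ys) (auto simp: norm_mult)

lemma pl_of_real: "prod_list (map (\<lambda>j. complex_of_real (f j)) ys) = complex_of_real (prod_list (map f ys))"
  by (induction ys) auto

lemma pl_mset: "mset xs = mset ys \<Longrightarrow> prod_list (map f xs) = prod_list (map f ys :: 'a::comm_monoid_mult list)"
  by (metis mset_map prod_mset_prod_list)

lemma crossing:
  assumes "(a, b) \<in> R\<^sup>*" "a \<in> S" "b \<notin> S"
  shows "\<exists>x y. (x, y) \<in> R \<and> x \<in> S \<and> y \<notin> S"
  using assms by (induction rule: rtrancl_induct) auto

lemma tidx_finite: "finite (tidx k n)"
proof -
  have "tidx k n = {xs. set xs \<subseteq> {1..n} \<and> length xs = k}" by (auto simp: tidx_def)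
  then show ?thesis using finite_lists_length_eq[of "{1..n}" k] by simp
qed


lemma cont_pl: "continuous_on UNIV (\<lambda>x::nat\<Rightarrow>real. prod_list (map x ys))"
proof (induction ys)
  case (Cons a ys)
  have "continuous_on UNIV (\<lambda>x::nat\<Rightarrow>real. x a * prod_list (map x ys))"
    by (intro continuous_on_mult Cons continuous_on_product_coordinates)
  then show ?case by simp
qed simp

lemma box_compact:
  fixes S :: "nat \<Rightarrow> real set"
  assumes "\<And>i. compact (S i)"
  shows "compact {x::nat\<Rightarrow>real. \<forall>i. x i \<in> S i}"
proof -
  have "{x::nat\<Rightarrow>real. \<forall>i. x i \<in> S i} = PiE UNIV S" by (auto simp: PiE_def Pi_def)
  moreover have "compactin (product_topology (\<lambda>i. euclidean) UNIV) (PiE UNIV S)"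
    using assms by (simp add: compactin_PiE)
  ultimately show ?thesis by (simp add: euclidean_product_topology)
qed

lemma closed_imp_const: "closed {x. Q x} \<Longrightarrow> closed {x. P \<longrightarrow> Q x}"
  by (cases P) auto

lemma closed_ball_fin: "(\<And>a. a \<in> I \<Longrightarrow> closed {x. Q a x}) \<Longrightarrow> closed {x. \<forall>a\<in>I. Q a x}"
proof -
  assume h: "\<And>a. a \<in> I \<Longrightarrow> closed {x. Q a x}"
  have "{x. \<forall>a\<in>I. Q a x} = (\<Inter>a\<in>I. {x. Q a x})" by auto
  then show ?thesis using h by (simp add: closed_INT)
qed

lemma tri_eq:
  fixes W :: "'a \<Rightarrow> complex"
  assumes fin: "finite S" and u: "cmod u = 1"
    and eq: "sum W S = u * complex_of_real (\<Sum>k\<in>S. cmod (W k))"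
  shows "\<forall>k\<in>S. W k = u * complex_of_real (cmod (W k))"
proof -
  have cu: "u * cnj u = 1" using complex_norm_square[of u] u by simp
  have "(\<Sum>k\<in>S. Re (cnj u * W k)) = Re (cnj u * sum W S)"
    by (simp add: sum_distrib_left)
  also have "\<dots> = (\<Sum>k\<in>S. cmod (W k))" using eq cu by (simp add: mult.assoc[symmetric] mult.commute[of "cnj u"])
  finally have s: "(\<Sum>k\<in>S. cmod (W k) - Re (cnj u * W k)) = 0" by (simp add: sum_subtractf)
  have le: "\<And>k. Re (cnj u * W k) \<le> cmod (W k)"
    using complex_Re_le_cmod by (metis complex_mod_cnj mult_1 norm_mult u)
  have z: "\<forall>k\<in>S. cmod (W k) - Re (cnj u * W k) = 0"
    using sum_nonneg_eq_0_iff[OF fin, of "\<lambda>k. cmod (W k) - Re (cnj u * W k)"] s le by auto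
  show ?thesis
  proof
    fix k assume k: "k \<in> S"
    define c where "c = cnj u * W k"
    have rc: "Re c = cmod c" using z k le by (simp add: c_def norm_mult complex_mod_cnj u)
    have "cmod c ^ 2 = Re c ^ 2 + Im c ^ 2" by (simp add: cmod_power2)
    then have "Im c = 0" using rc by simp
    then have "c = complex_of_real (cmod c)" using rc by (simp add: complex_eq_iff)
    then have "u * c = u * complex_of_real (cmod (W k))" by (simp add: c_def norm_mult complex_mod_cnj u)
    moreover have "u * c = W k" using cu by (simp add: c_def mult.assoc[symmetric])
    ultimately show "W k = u * complex_of_real (cmod (W k))" by simp
  qed
qed

definition sg :: "complex \<Rightarrow> complex" where "sg z = z / complex_of_real (cmod z)"

lemma sg_norm: "z \<noteq> 0 \<Longrightarrow> cmod (sg z) = 1"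
  by (simp add: sg_def norm_divide)

lemma sg_mult: "z = sg z * complex_of_real (cmod z)"
  by (cases "z = 0") (auto simp: sg_def)

lemma sg_nz: "z \<noteq> 0 \<Longrightarrow> sg z \<noteq> 0"
  by (simp add: sg_def)

lemma sg_real_pos: "0 < c \<Longrightarrow> sg (complex_of_real c) = 1"
  by (simp add: sg_def)

lemma sg_pos_real: "0 < c \<Longrightarrow> cmod u = 1 \<Longrightarrow> sg (u * complex_of_real c) = u"
  by (simp add: sg_def norm_mult)

locale pt =
  fixes m n :: nat and A :: tensor
  assumes m2: "2 \<le> m" and n1: "1 \<le> n" and nonneg: "nonneg_tensor m n A"
    and csym: "comb_symmetric m n A" and wirr: "weakly_irreducible m n A"
begin

definition tp :: "(nat \<Rightarrow> real) \<Rightarrow> nat \<Rightarrow> real" where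
  "tp x i = (\<Sum>ys\<in>tidx (m - 1) n. A (i # ys) * prod_list (map x ys))"

lemma tidx_Cons: "i \<in> {1..n} \<Longrightarrow> ys \<in> tidx (m-1) n \<Longrightarrow> i # ys \<in> tidx m n"
  using m2 by (auto simp: tidx_def)

lemma tidx_set: "ys \<in> tidx k n \<Longrightarrow> j \<in> set ys \<Longrightarrow> j \<in> {1..n}"
  by (auto simp: tidx_def)

lemma tidx_len: "ys \<in> tidx k n \<Longrightarrow> length ys = k"
  by (auto simp: tidx_def)

lemma tidx_split: "xs \<in> tidx m n \<Longrightarrow> xs = hd xs # tl xs \<and> hd xs \<in> {1..n} \<and> tl xs \<in> tidx (m-1) n"
proof -
  assume xs: "xs \<in> tidx m n"
  then have "xs \<noteq> []" using m2 by (auto simp: tidx_def)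
  then show ?thesis using xs by (cases xs) (auto simp: tidx_def)
qed

lemma A_nonneg: "xs \<in> tidx m n \<Longrightarrow> 0 \<le> A xs"
  using nonneg by (auto simp: nonneg_tensor_def)

lemma A_Cons_nonneg: "i \<in> {1..n} \<Longrightarrow> ys \<in> tidx (m-1) n \<Longrightarrow> 0 \<le> A (i # ys)"
  using A_nonneg tidx_Cons by blast

lemma perm_head:
  assumes xs: "xs \<in> tidx m n" and nz: "A xs \<noteq> 0" and l: "l \<in> set xs"
  shows "remove1 l xs \<in> tidx (m-1) n" "A (l # remove1 l xs) \<noteq> 0"
    "mset (l # remove1 l xs) = mset xs" "l # remove1 l xs \<in> tidx m n"
proof -
  show ms: "mset (l # remove1 l xs) = mset xs" using l by (simp add: insert_DiffM)
  show "remove1 l xs \<in> tidx (m-1) n" using xs l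
    using set_remove1_subset[of l xs] by (auto simp: tidx_def length_remove1)
  then show xs': "l # remove1 l xs \<in> tidx m n" using l xs by (intro tidx_Cons) (auto simp: tidx_def)
  show "A (l # remove1 l xs) \<noteq> 0" using csym xs xs' ms nz unfolding comb_symmetric_def by metis
qed

lemma arc_edge:
  assumes "(i, j) \<in> tensor_digraph m n A"
  shows "\<exists>xs\<in>tidx m n. A xs \<noteq> 0 \<and> hd xs = i \<and> j \<in> set (tl xs) \<and> i \<in> set xs \<and> j \<in> set xs
     \<and> i \<in> {1..n} \<and> j \<in> {1..n}"
proof -
  obtain xs where xs: "xs \<in> tidx m n" "A xs \<noteq> 0" "hd xs = i" "j \<in> set (tl xs)"
    using assms by (auto simp: tensor_digraph_def)
  have sp: "xs = hd xs # tl xs" "hd xs \<in> {1..n}" "tl xs \<in> tidx (m-1) n" using tidx_split[OF xs(1)] by auto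
  have "i \<in> set xs" using sp xs by (metis list.set_intros(1))
  moreover have "j \<in> set xs" using sp xs by (metis list.set_intros(2))
  ultimately show ?thesis using xs sp tidx_set[OF xs(1)] by blast
qed

lemma conn: "i \<in> {1..n} \<Longrightarrow> j \<in> {1..n} \<Longrightarrow> (i, j) \<in> (tensor_digraph m n A)\<^sup>*"
  using wirr by (auto simp: weakly_irreducible_def)

lemma cross_edge:
  assumes "S \<subseteq> {1..n}" "k \<in> S" "j \<in> {1..n}" "j \<notin> S"
  shows "\<exists>xs\<in>tidx m n. \<exists>a b. A xs \<noteq> 0 \<and> hd xs = a \<and> b \<in> set (tl xs) \<and> a \<in> set xs \<and> b \<in> set xs
     \<and> a \<in> S \<and> b \<in> {1..n} - S"
proof -
  have "k \<in> {1..n}" using assms by auto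
  then obtain a b where ab: "(a, b) \<in> tensor_digraph m n A" "a \<in> S" "b \<notin> S"
    using crossing[OF conn[of k j]] assms by blast
  then show ?thesis using arc_edge[OF ab(1)] by blast
qed

lemma tp_cong: "(\<And>j. j \<in> {1..n} \<Longrightarrow> x j = y j) \<Longrightarrow> tp x i = tp y i"
  unfolding tp_def by (intro sum.cong refl arg_cong2[where f="(*)"] pl_cong) (auto dest: tidx_set)

lemma tp_nonneg: "(\<And>j. j \<in> {1..n} \<Longrightarrow> 0 \<le> x j) \<Longrightarrow> i \<in> {1..n} \<Longrightarrow> 0 \<le> tp x i"
  unfolding tp_def by (intro sum_nonneg mult_nonneg_nonneg A_Cons_nonneg pl_nonneg) (auto dest: tidx_set)

lemma tp_mono: "(\<And>j. j \<in> {1..n} \<Longrightarrow> 0 \<le> x j \<and> x j \<le> y j) \<Longrightarrow> i \<in> {1..n} \<Longrightarrow> tp x i \<le> tp y i"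
  unfolding tp_def by (intro sum_mono mult_left_mono A_Cons_nonneg pl_mono) (auto dest: tidx_set)

lemma tp_scale: "tp (\<lambda>j. t * x j) i = t ^ (m-1) * tp x i"
  unfolding tp_def sum_distrib_left
  by (intro sum.cong refl) (auto simp: pl_scale tidx_len)

lemma tp_term: "(\<And>j. j \<in> {1..n} \<Longrightarrow> 0 \<le> x j) \<Longrightarrow> i \<in> {1..n} \<Longrightarrow> ys \<in> tidx (m-1) n \<Longrightarrow>
   A (i # ys) * prod_list (map x ys) \<le> tp x i"
  unfolding tp_def
  by (rule member_le_sum[where f="\<lambda>ys. A (i # ys) * prod_list (map x ys)"])
     (auto intro!: mult_nonneg_nonneg A_Cons_nonneg pl_nonneg tidx_finite dest: tidx_set)

lemma tp_strict:
  assumes "\<And>j. j \<in> {1..n} \<Longrightarrow> 0 \<le> x j \<and> x j \<le> y j \<and> 0 < y j" "i \<in> {1..n}"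
    "ys \<in> tidx (m-1) n" "A (i # ys) \<noteq> 0" "j0 \<in> set ys" "x j0 < y j0"
  shows "tp x i < tp y i"
  unfolding tp_def
proof (rule sum_strict_mono_ex1)
  show "finite (tidx (m - 1) n)" by (rule tidx_finite)
  show "\<forall>zs\<in>tidx (m - 1) n. A (i # zs) * prod_list (map x zs) \<le> A (i # zs) * prod_list (map y zs)"
    using assms by (auto intro!: mult_left_mono A_Cons_nonneg pl_mono dest: tidx_set)
  have "0 < A (i # ys)" using A_Cons_nonneg[OF assms(2,3)] assms(4) by simp
  moreover have "prod_list (map x ys) < prod_list (map y ys)"
    using assms by (intro pl_strict) (auto dest: tidx_set)
  ultimately show "\<exists>zs\<in>tidx (m - 1) n. A (i # zs) * prod_list (map x zs) < A (i # zs) * prod_list (map y zs)"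
    using assms(3) by (intro bexI[of _ ys]) auto
qed

lemma ta_real: "tensor_apply m n A (\<lambda>j. complex_of_real (x j)) i = complex_of_real (tp x i)"
  unfolding tensor_apply_def tp_def by (simp add: pl_of_real)

lemma ta_norm: "i \<in> {1..n} \<Longrightarrow> norm (tensor_apply m n A y i) \<le> tp (\<lambda>j. norm (y j)) i"
  unfolding tensor_apply_def tp_def
  apply (rule order_trans[OF norm_sum])
  apply (intro sum_mono)
  using A_Cons_nonneg by (auto simp: norm_mult pl_norm)


definition amin :: real where
  "amin = (if {A xs | xs. xs \<in> tidx m n \<and> A xs \<noteq> 0} = {} then 1
           else Min {A xs | xs. xs \<in> tidx m n \<and> A xs \<noteq> 0})"

lemma amin_fin: "finite {A xs | xs. xs \<in> tidx m n \<and> A xs \<noteq> 0}"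
  using tidx_finite[of m n] by simp

lemma amin_pos: "0 < amin"
proof (cases "{A xs | xs. xs \<in> tidx m n \<and> A xs \<noteq> 0} = {}")
  case False
  have "\<forall>a\<in>{A xs | xs. xs \<in> tidx m n \<and> A xs \<noteq> 0}. 0 < a"
    using A_nonneg by (auto simp: order_le_less)
  then show ?thesis using False amin_fin Min_in unfolding amin_def by auto
qed (simp add: amin_def)

lemma amin_le: "xs \<in> tidx m n \<Longrightarrow> A xs \<noteq> 0 \<Longrightarrow> amin \<le> A xs"
  unfolding amin_def using amin_fin by (auto intro!: Min_le)

definition Bd :: real where
  "Bd = 1 + (\<Sum>i\<in>{1..n}. \<Sum>ys\<in>tidx (m-1) n. A (i # ys))"

lemma Bd_ge1: "1 \<le> Bd"
  unfolding Bd_def by (auto intro!: sum_nonneg A_Cons_nonneg)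

definition qq :: real where "qq = min 1 (amin / Bd)"

lemma qq_pos: "0 < qq" and qq_le1: "qq \<le> 1"
  using amin_pos Bd_ge1 by (auto simp: qq_def)

lemma LB:
  assumes pos: "\<And>j. j \<in> {1..n} \<Longrightarrow> 0 < x j"
    and r: "r \<le> Bd" and sub: "\<And>i. i \<in> {1..n} \<Longrightarrow> tp x i \<le> r * x i ^ (m-1)"
    and xs: "xs \<in> tidx m n" "A xs \<noteq> 0" and u: "u \<in> set xs" and w: "w \<in> set xs"
  shows "qq * x u \<le> x w"
proof -
  have fin: "finite (x ` set xs)" "x ` set xs \<noteq> {}" using u by auto
  obtain l where l: "l \<in> set xs" "x l = Min (x ` set xs)" using Min_in[OF fin] by auto
  have lmin: "\<And>v. v \<in> set xs \<Longrightarrow> x l \<le> x v" using l fin by auto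
  have inn: "\<And>v. v \<in> set xs \<Longrightarrow> v \<in> {1..n}" using xs(1) tidx_set by blast
  have xl: "0 < x l" using pos[of l] inn[OF l(1)] by blast
  have xu: "0 < x u" using pos inn u by auto
  have "qq * x u \<le> x l"
  proof (cases "u = l")
    case True then show ?thesis using qq_le1 xu by (simp add: mult_le_cancel_right1)
  next
    case False
    define ys where "ys = remove1 l xs"
    have ys: "ys \<in> tidx (m-1) n" "A (l # ys) \<noteq> 0" using perm_head[OF xs l(1)] by (auto simp: ys_def)
    have uy: "u \<in> set ys" using False u by (simp add: ys_def)
    have geq: "\<And>v. v \<in> set ys \<Longrightarrow> x l \<le> x v" using lmin set_remove1_subset[of l xs] by (auto simp: ys_def)
    have "x u * x l ^ (length ys - 1) \<le> prod_list (map x ys)"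
      using pl_lower[of ys "x l" x u] geq xl uy by auto
    then have p: "x u * x l ^ (m - 2) \<le> prod_list (map x ys)" using tidx_len[OF ys(1)] by (simp add: diff_diff_add numeral_2_eq_2)
    have lin: "l \<in> {1..n}" using inn l by auto
    have "amin \<le> A (l # ys)" using amin_le ys perm_head[OF xs l(1)] by (simp add: ys_def)
    then have "amin * (x u * x l ^ (m - 2)) \<le> A (l # ys) * prod_list (map x ys)"
      using p xl xu A_Cons_nonneg[OF lin ys(1)] amin_pos by (intro mult_mono) auto
    also have "\<dots> \<le> tp x l" using tp_term[OF _ lin ys(1)] pos by (simp add: less_imp_le)
    also have "\<dots> \<le> r * x l ^ (m - 1)" using sub lin by auto
    also have "x l ^ (m - 1) = x l * x l ^ (m - 2)"
    proof -
      have "m - 1 = Suc (m - 2)" using m2 by arith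
      then show ?thesis by simp
    qed
    finally have "amin * x u * x l ^ (m - 2) \<le> (r * x l) * x l ^ (m - 2)" by (simp only: mult.assoc mult.left_commute)
    then have "amin * x u \<le> r * x l" using xl by (simp add: mult_le_cancel_right)
    also have "\<dots> \<le> Bd * x l" using r xl by (simp add: mult_right_mono)
    finally have "amin / Bd * x u \<le> x l" using Bd_ge1 by (simp add: field_simps)
    moreover have "qq * x u \<le> amin / Bd * x u" using xu by (intro mult_right_mono) (auto simp: qq_def)
    ultimately show ?thesis by linarith
  qed
  then show ?thesis using lmin[OF w] by linarith
qed


lemma improve_step:
  assumes pos: "\<And>j. j \<in> {1..n} \<Longrightarrow> 0 < z j"
    and le: "\<And>i. i \<in> {1..n} \<Longrightarrow> tp z i \<le> r * z i ^ (m-1)"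
    and st: "i0 \<in> {1..n}" "tp z i0 < r * z i0 ^ (m-1)"
    and E: "E = {i \<in> {1..n}. \<not> tp z i < r * z i ^ (m-1)}" and Ene: "E \<noteq> {}"
  shows "\<exists>y. (\<forall>j\<in>{1..n}. 0 < y j) \<and> (\<forall>i\<in>{1..n}. tp y i \<le> r * y i ^ (m-1))
     \<and> {i \<in> {1..n}. \<not> tp y i < r * y i ^ (m-1)} \<subset> E \<and> i0 \<in> {1..n} - E"
proof -
  define T where "T = {1..n} - E"
  have i0T: "i0 \<in> T" using st by (simp add: T_def E)
  have Tfin: "finite T" by (simp add: T_def)
  have zpow: "\<And>i. i \<in> {1..n} \<Longrightarrow> 0 < z i ^ (m-1)" using pos by simp
  have tpnn: "\<And>i. i \<in> {1..n} \<Longrightarrow> 0 \<le> tp z i" using pos by (intro tp_nonneg) (auto simp: less_imp_le)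
  have rpos: "0 < r"
  proof -
    have "0 < r * z i0 ^ (m-1)" using tpnn[OF st(1)] st(2) by linarith
    then show ?thesis by (rule zero_less_mult_pos2[OF _ zpow[OF st(1)]])
  qed
  define qf where "qf i = tp z i / (r * z i ^ (m-1))" for i
  define qm where "qm = Max (qf ` T)"
  have qf_lt: "\<And>i. i \<in> T \<Longrightarrow> qf i < 1" using zpow rpos
    by (auto simp: qf_def T_def E divide_less_eq)
  have qm_lt: "qm < 1" unfolding qm_def using qf_lt Tfin i0T by (subst Max_less_iff) auto
  have qf_le: "\<And>i. i \<in> T \<Longrightarrow> qf i \<le> qm" using Tfin by (auto simp: qm_def)
  have qm_nn: "0 \<le> qm"
  proof -
    have "0 \<le> qf i0" using tpnn[OF st(1)] rpos zpow[OF st(1)] by (simp add: qf_def)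
    then show ?thesis using qf_le[OF i0T] by linarith
  qed
  define c where "c = (1 + qm) / 2"
  have c: "qm < c" "c < 1" "0 < c" using qm_lt qm_nn by (auto simp: c_def)
  define s where "s = root (m-1) c"
  have m1: "0 < m - 1" using m2 by arith
  have s: "s ^ (m-1) = c" "0 < s" "s < 1" using c m1
    by (auto simp: s_def real_root_pow_pos2 real_root_lt_1_iff)
  define y where "y j = (if j \<in> T then s * z j else z j)" for j
  have ypos: "\<And>j. j \<in> {1..n} \<Longrightarrow> 0 < y j" using pos s by (auto simp: y_def)
  have ylez: "\<And>j. j \<in> {1..n} \<Longrightarrow> 0 \<le> y j \<and> y j \<le> z j \<and> 0 < z j"
    using pos s ypos by (auto simp: y_def less_imp_le mult_le_cancel_right1)
  have tpyz: "\<And>i. i \<in> {1..n} \<Longrightarrow> tp y i \<le> tp z i" using ylez by (intro tp_mono) auto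
  have Tstrict: "tp y i < r * y i ^ (m-1)" if iT: "i \<in> T" for i
  proof -
    have i: "i \<in> {1..n}" using iT by (simp add: T_def)
    have nz: "r * z i ^ (m-1) \<noteq> 0" using mult_pos_pos[OF rpos zpow[OF i]] by (metis less_irrefl)
    have "tp z i = qf i * (r * z i ^ (m-1))" using nz unfolding qf_def by simp
    also have "\<dots> \<le> qm * (r * z i ^ (m-1))" using qf_le[OF iT] rpos zpow[OF i] by (intro mult_right_mono) auto
    also have "\<dots> < c * (r * z i ^ (m-1))" using c rpos zpow[OF i] by (intro mult_strict_right_mono) auto
    also have "\<dots> = r * y i ^ (m-1)" using iT s by (simp add: y_def power_mult_distrib)
    finally show ?thesis using tpyz[OF i] by linarith
  qed
  have Ele: "tp y i \<le> r * y i ^ (m-1)" if "i \<in> E" for i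
    using that tpyz[of i] le[of i] by (auto simp: E y_def T_def)
  have yle: "\<forall>i\<in>{1..n}. tp y i \<le> r * y i ^ (m-1)"
  proof
    fix i assume i: "i \<in> {1..n}"
    show "tp y i \<le> r * y i ^ (m-1)"
    proof (cases "i \<in> E")
      case True then show ?thesis by (rule Ele)
    next
      case False then show ?thesis using Tstrict[of i] i by (auto simp: T_def)
    qed
  qed
  have sub: "{i \<in> {1..n}. \<not> tp y i < r * y i ^ (m-1)} \<subseteq> E"
    using Tstrict by (auto simp: T_def)
  obtain k where k: "k \<in> E" using Ene by auto
  have ES: "E \<subseteq> {1..n}" by (auto simp: E)
  obtain xs a b where xs: "xs \<in> tidx m n" "A xs \<noteq> 0" "hd xs = a" "b \<in> set (tl xs)"
     "a \<in> E" "b \<in> {1..n} - E"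
    using cross_edge[OF ES k, of i0] st i0T by (auto simp: T_def)
  have sp: "xs = hd xs # tl xs" "hd xs \<in> {1..n}" "tl xs \<in> tidx (m-1) n" using tidx_split[OF xs(1)] by auto
  have bT: "b \<in> T" using xs by (simp add: T_def)
  have yb: "y b < z b" using bT s pos[of b] xs(6) by (simp add: y_def)
  have Anz: "A (a # tl xs) \<noteq> 0" using xs sp by metis
  have "tp y a < tp z a" by (rule tp_strict[of y z a "tl xs" b]) (use ylez sp xs yb Anz in auto)
  also have "\<dots> \<le> r * z a ^ (m-1)" using le xs sp by auto
  also have "\<dots> = r * y a ^ (m-1)" using xs by (simp add: y_def T_def)
  finally have "a \<notin> {i \<in> {1..n}. \<not> tp y i < r * y i ^ (m-1)}" by simp
  then have "{i \<in> {1..n}. \<not> tp y i < r * y i ^ (m-1)} \<subset> E" using sub xs(5) by blast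
  then show ?thesis using ypos yle i0T unfolding T_def by blast
qed

lemma improve:
  assumes "\<And>j. j \<in> {1..n} \<Longrightarrow> 0 < z j"
    and "\<And>i. i \<in> {1..n} \<Longrightarrow> tp z i \<le> r * z i ^ (m-1)"
    and "i0 \<in> {1..n}" "tp z i0 < r * z i0 ^ (m-1)"
  shows "\<exists>y. (\<forall>j\<in>{1..n}. 0 < y j) \<and> (\<forall>i\<in>{1..n}. tp y i < r * y i ^ (m-1))"
  using assms
proof (induction "card {i \<in> {1..n}. \<not> tp z i < r * z i ^ (m-1)}" arbitrary: z i0 rule: less_induct)
  case less
  define E where "E = {i \<in> {1..n}. \<not> tp z i < r * z i ^ (m-1)}"
  show ?case
  proof (cases "E = {}")
    case True
    then show ?thesis using less.prems by (intro exI[of _ z]) (auto simp: E_def)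
  next
    case False
    obtain y where y: "\<forall>j\<in>{1..n}. 0 < y j" "\<forall>i\<in>{1..n}. tp y i \<le> r * y i ^ (m-1)"
      "{i \<in> {1..n}. \<not> tp y i < r * y i ^ (m-1)} \<subset> E" "i0 \<in> {1..n} - E"
      using improve_step[OF less.prems E_def False] by blast
    have "card {i \<in> {1..n}. \<not> tp y i < r * y i ^ (m-1)} < card E"
      using y(3) by (intro psubset_card_mono) (auto simp: E_def)
    moreover have "tp y i0 < r * y i0 ^ (m-1)" using y(3,4) by (auto simp: E_def)
    ultimately show ?thesis using less.hyps[of y i0] y less.prems(3) by (auto simp: E_def)
  qed
qed

lemma cmp:
  assumes v: "\<And>j. j \<in> {1..n} \<Longrightarrow> 0 < v j" and ev: "\<And>i. i \<in> {1..n} \<Longrightarrow> tp v i = r * v i ^ (m-1)"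
    and w: "\<And>j. j \<in> {1..n} \<Longrightarrow> 0 \<le> w j" and sup: "\<And>i. i \<in> {1..n} \<Longrightarrow> r * w i ^ (m-1) \<le> tp w i"
  shows "\<exists>t\<ge>0. \<forall>j\<in>{1..n}. w j = t * v j"
proof -
  define t where "t = Max ((\<lambda>j. w j / v j) ` {1..n})"
  have fin: "finite ((\<lambda>j. w j / v j) ` {1..n})" "(\<lambda>j. w j / v j) ` {1..n} \<noteq> {}" using n1 by auto
  obtain k where k: "k \<in> {1..n}" "w k / v k = t" using Max_in[OF fin] by (auto simp: t_def)
  have tge: "\<And>j. j \<in> {1..n} \<Longrightarrow> w j \<le> t * v j"
  proof -
    fix j assume j: "j \<in> {1..n}"
    have "w j / v j \<le> t" using fin j by (auto simp: t_def)
    then show "w j \<le> t * v j" using v[OF j] by (simp add: divide_le_eq)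
  qed
  have t0: "0 \<le> t" using k w[of k] v[of k] by auto
  show ?thesis
  proof (cases "t = 0")
    case True
    then show ?thesis using tge w by (intro exI[of _ 0]) (auto intro: antisym)
  next
    case False
    then have tpos: "0 < t" using t0 by simp
    define S where "S = {j \<in> {1..n}. w j = t * v j}"
    have kS: "k \<in> S" using k v[of k] by (auto simp: S_def field_simps)
    have tv: "\<And>j. j \<in> {1..n} \<Longrightarrow> 0 \<le> w j \<and> w j \<le> t * v j \<and> 0 < t * v j"
      using tge w v tpos by auto
    have tpt: "tp (\<lambda>j. t * v j) i = r * (t * v i) ^ (m-1)" if "i \<in> {1..n}" for i
      using ev[OF that] by (simp add: tp_scale power_mult_distrib)
    have "S = {1..n}"
    proof (rule ccontr)
      assume "S \<noteq> {1..n}"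
      moreover have SS: "S \<subseteq> {1..n}" by (auto simp: S_def)
      ultimately obtain j where j: "j \<in> {1..n}" "j \<notin> S" by blast
      have "\<exists>xs\<in>tidx m n. \<exists>a b. A xs \<noteq> 0 \<and> hd xs = a \<and> b \<in> set (tl xs) \<and> a \<in> set xs \<and> b \<in> set xs
     \<and> a \<in> S \<and> b \<in> {1..n} - S"
        by (rule cross_edge) (use kS j SS in auto)
      then obtain xs a b where xs: "xs \<in> tidx m n" "A xs \<noteq> 0" "hd xs = a" "b \<in> set (tl xs)"
        "a \<in> S" "b \<in> {1..n} - S" by blast
      have sp: "xs = hd xs # tl xs" "hd xs \<in> {1..n}" "tl xs \<in> tidx (m-1) n" using tidx_split[OF xs(1)] by auto
      have wb: "w b < t * v b" using xs tge[of b] by (auto simp: S_def)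
      have Anz: "A (a # tl xs) \<noteq> 0" using xs sp by metis
      have "tp w a < tp (\<lambda>j. t * v j) a"
        by (rule tp_strict[of w "\<lambda>j. t * v j" a "tl xs" b]) (use tv sp xs wb Anz in auto)
      also have "\<dots> = r * w a ^ (m-1)" using tpt[of a] xs sp by (auto simp: S_def)
      finally show False using sup[of a] xs sp by auto
    qed
    then show ?thesis using t0 by (intro exI[of _ t]) (auto simp: S_def)
  qed
qed


lemma cont_tp: "continuous_on UNIV (\<lambda>x. tp x i)"
  unfolding tp_def by (intro continuous_on_sum continuous_on_mult continuous_on_const cont_pl)

definition Kset :: "(nat \<Rightarrow> real) set" where
  "Kset = {x. (\<forall>i. x i \<in> (if i = 0 then {0..Bd} else if i \<le> n then {0..1} else {0}))
      \<and> (\<Sum>i\<in>{1..n}. x i) = 1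
      \<and> (\<forall>xs\<in>tidx m n. A xs \<noteq> 0 \<longrightarrow> (\<forall>u\<in>set xs. \<forall>w\<in>set xs. qq * x u \<le> x w))
      \<and> (\<forall>i\<in>{1..n}. tp x i \<le> x 0 * x i ^ (m-1))}"

lemma Kset_compact: "compact Kset"
proof -
  have eq: "Kset = {x. \<forall>i. x i \<in> (if i = 0 then {0..Bd} else if i \<le> n then {0..1} else {0})} \<inter>
     ({x. (\<Sum>i\<in>{1..n}. x i) = 1} \<inter>
      ({x. \<forall>xs\<in>tidx m n. A xs \<noteq> 0 \<longrightarrow> (\<forall>u\<in>set xs. \<forall>w\<in>set xs. qq * x u \<le> x w)} \<inter>
      {x. \<forall>i\<in>{1..n}. tp x i \<le> x 0 * x i ^ (m-1)}))"
    unfolding Kset_def by blast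
  have c1: "compact {x::nat\<Rightarrow>real. \<forall>i. x i \<in> (if i = 0 then {0..Bd} else if i \<le> n then {0..1} else {0})}"
    by (rule box_compact) auto
  have c2: "closed {x::nat\<Rightarrow>real. (\<Sum>i\<in>{1..n}. x i) = 1}"
    by (intro closed_Collect_eq continuous_on_sum continuous_on_product_coordinates continuous_on_const)
  have c3: "closed {x::nat\<Rightarrow>real. \<forall>xs\<in>tidx m n. A xs \<noteq> 0 \<longrightarrow> (\<forall>u\<in>set xs. \<forall>w\<in>set xs. qq * x u \<le> x w)}"
    by (intro closed_ball_fin closed_imp_const closed_Collect_le continuous_on_mult
        continuous_on_product_coordinates continuous_on_const)
  have c4: "closed {x::nat\<Rightarrow>real. \<forall>i\<in>{1..n}. tp x i \<le> x 0 * x i ^ (m-1)}"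
    by (intro closed_ball_fin closed_Collect_le continuous_on_mult cont_tp continuous_on_power
        continuous_on_product_coordinates)
  show ?thesis unfolding eq by (intro compact_Int_closed closed_Int c1 c2 c3 c4)
qed

lemma tp_const1: "i \<in> {1..n} \<Longrightarrow> tp (\<lambda>_. 1) i \<le> Bd"
proof -
  assume i: "i \<in> {1..n}"
  have "tp (\<lambda>_. 1) i = (\<Sum>ys\<in>tidx (m-1) n. A (i # ys))"
    unfolding tp_def by (simp add: pl_one)
  also have "\<dots> \<le> (\<Sum>i\<in>{1..n}. \<Sum>ys\<in>tidx (m-1) n. A (i # ys))"
    using i by (intro member_le_sum sum_nonneg A_Cons_nonneg) auto
  finally show ?thesis unfolding Bd_def by simp
qed

definition x0 :: "nat \<Rightarrow> real" where
  "x0 i = (if i = 0 then Bd else if i \<le> n then 1 / real n else 0)"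

lemma x0_in: "x0 \<in> Kset"
proof -
  have np: "0 < real n" using n1 by simp
  have "\<forall>i. x0 i \<in> (if i = 0 then {0..Bd} else if i \<le> n then {0..1} else {0})"
    using Bd_ge1 n1 by (auto simp: x0_def)
  moreover have "(\<Sum>i\<in>{1..n}. x0 i) = 1" using np by (simp add: x0_def)
  moreover have "\<forall>xs\<in>tidx m n. A xs \<noteq> 0 \<longrightarrow> (\<forall>u\<in>set xs. \<forall>w\<in>set xs. qq * x0 u \<le> x0 w)"
  proof (intro ballI impI)
    fix xs u w assume xs: "xs \<in> tidx m n" and u: "u \<in> set xs" and w: "w \<in> set xs"
    have "u \<in> {1..n}" "w \<in> {1..n}" using xs u w tidx_set by auto
    then show "qq * x0 u \<le> x0 w" using qq_le1 np by (simp add: x0_def divide_right_mono)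
  qed
  moreover have "\<forall>i\<in>{1..n}. tp x0 i \<le> x0 0 * x0 i ^ (m-1)"
  proof
    fix i assume i: "i \<in> {1..n}"
    have "tp x0 i = tp (\<lambda>j. (1 / real n) * 1) i" by (rule tp_cong) (auto simp: x0_def)
    also have "\<dots> = (1 / real n) ^ (m-1) * tp (\<lambda>_. 1) i" by (rule tp_scale)
    also have "\<dots> \<le> (1 / real n) ^ (m-1) * Bd" using tp_const1[OF i] np by (intro mult_left_mono) auto
    also have "\<dots> = x0 0 * x0 i ^ (m-1)" using i by (simp add: x0_def)
    finally show "tp x0 i \<le> x0 0 * x0 i ^ (m-1)" .
  qed
  ultimately show ?thesis unfolding Kset_def by blast
qed


lemma pf_exists:
  "\<exists>v r. (\<forall>j\<in>{1..n}. 0 < v j) \<and> v 1 = 1 \<and> 0 \<le> r \<and> (\<forall>i\<in>{1..n}. tp v i = r * v i ^ (m-1))"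
proof -
  have ne: "Kset \<noteq> {}" using x0_in by blast
  have cont: "continuous_on Kset (\<lambda>x::nat\<Rightarrow>real. x 0)"
    by (rule continuous_on_subset[OF continuous_on_product_coordinates]) simp
  obtain z where zK: "z \<in> Kset" and zmin: "\<And>y. y \<in> Kset \<Longrightarrow> z 0 \<le> y 0"
    using continuous_attains_inf[OF Kset_compact ne cont] by blast
  define r where "r = z 0"
  have zK': "(\<forall>i. z i \<in> (if i = 0 then {0..Bd} else if i \<le> n then {0..1} else {0}))
      \<and> (\<Sum>i\<in>{1..n}. z i) = 1
      \<and> (\<forall>xs\<in>tidx m n. A xs \<noteq> 0 \<longrightarrow> (\<forall>u\<in>set xs. \<forall>w\<in>set xs. qq * z u \<le> z w))
      \<and> (\<forall>i\<in>{1..n}. tp z i \<le> z 0 * z i ^ (m-1))" using zK unfolding Kset_def by (rule CollectD)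
  have zbox: "\<And>i. z i \<in> (if i = 0 then {0..Bd} else if i \<le> n then {0..1} else {0})"
    by (rule spec[OF conjunct1[OF zK']])
  have zsum: "(\<Sum>i\<in>{1..n}. z i) = 1" by (rule conjunct1[OF conjunct2[OF zK']])
  have zedge: "\<And>xs u w. xs \<in> tidx m n \<Longrightarrow> A xs \<noteq> 0 \<Longrightarrow> u \<in> set xs \<Longrightarrow> w \<in> set xs \<Longrightarrow> qq * z u \<le> z w"
    using conjunct1[OF conjunct2[OF conjunct2[OF zK']]] by blast
  have ztp: "\<And>i. i \<in> {1..n} \<Longrightarrow> tp z i \<le> r * z i ^ (m-1)"
    using conjunct2[OF conjunct2[OF conjunct2[OF zK']]] unfolding r_def by blast
  have r0: "0 \<le> r" "r \<le> Bd" using zbox[of 0] by (auto simp: r_def)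
  have znn: "0 \<le> z j" if j: "j \<in> {1..n}" for j using zbox[of j] j by simp
  have "\<exists>i0\<in>{1..n}. 0 < z i0"
  proof (rule ccontr)
    assume "\<not> (\<exists>i0\<in>{1..n}. 0 < z i0)"
    then have "\<forall>j\<in>{1..n}. z j \<le> 0" by (simp add: not_less)
    then have "(\<Sum>i\<in>{1..n}. z i) \<le> 0" by (intro sum_nonpos) auto
    then show False using zsum by simp
  qed
  then obtain i0 where i0: "i0 \<in> {1..n}" "0 < z i0" by blast
  have zpos: "0 < z j" if j: "j \<in> {1..n}" for j
  proof -
    have "(i0, j) \<in> (tensor_digraph m n A)\<^sup>*" using conn[OF i0(1) j] .
    then show ?thesis
    proof (induction rule: rtrancl_induct)
      case base then show ?case using i0 by simp
    next
      case (step b c)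
      obtain xs where xs: "xs \<in> tidx m n" "A xs \<noteq> 0" "b \<in> set xs" "c \<in> set xs"
        using arc_edge[OF step(2)] by blast
      have "qq * z b \<le> z c" by (rule zedge[OF xs])
      moreover have "0 < qq * z b" using qq_pos step(3) by simp
      ultimately show ?case by linarith
    qed
  qed
  have eig: "\<forall>i\<in>{1..n}. tp z i = r * z i ^ (m-1)"
  proof (rule ccontr)
    assume "\<not> ?thesis"
    then obtain i1 where i1a: "i1 \<in> {1..n}" "tp z i1 \<noteq> r * z i1 ^ (m-1)" by blast
    then have i1: "i1 \<in> {1..n}" "tp z i1 < r * z i1 ^ (m-1)" using ztp[OF i1a(1)] by auto
    obtain y where ypos: "\<forall>j\<in>{1..n}. 0 < y j" and yst: "\<forall>i\<in>{1..n}. tp y i < r * y i ^ (m-1)"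
      using improve[OF zpos ztp i1] by blast
    define \<sigma> where "\<sigma> = (\<Sum>j\<in>{1..n}. y j)"
    have sp: "0 < \<sigma>" unfolding \<sigma>_def using ypos n1 by (intro sum_pos) auto
    define y' where "y' j = (1 / \<sigma>) * y j" for j
    have y'pos: "\<And>j. j \<in> {1..n} \<Longrightarrow> 0 < y' j" using ypos sp by (simp add: y'_def)
    have y'sum: "(\<Sum>j\<in>{1..n}. y' j) = 1" unfolding y'_def sum_distrib_left[symmetric] \<sigma>_def[symmetric] using sp by simp
    have y'st: "tp y' i < r * y' i ^ (m-1)" if i: "i \<in> {1..n}" for i
    proof -
      have "tp y' i = (1/\<sigma>) ^ (m-1) * tp y i" unfolding y'_def by (rule tp_scale)
      also have "\<dots> < (1/\<sigma>) ^ (m-1) * (r * y i ^ (m-1))" using yst i sp by simp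
      also have "\<dots> = r * y' i ^ (m-1)" unfolding y'_def power_mult_distrib by simp
      finally show ?thesis .
    qed
    have y'pw: "\<And>i. i \<in> {1..n} \<Longrightarrow> 0 < y' i ^ (m-1)" using y'pos by simp
    define r' where "r' = Max ((\<lambda>i. tp y' i / y' i ^ (m-1)) ` {1..n})"
    have fin: "finite ((\<lambda>i. tp y' i / y' i ^ (m-1)) ` {1..n})" "(\<lambda>i. tp y' i / y' i ^ (m-1)) ` {1..n} \<noteq> {}"
      using n1 by auto
    have r'lt: "r' < r" unfolding r'_def
    proof (subst Max_less_iff[OF fin], intro ballI)
      fix q assume "q \<in> (\<lambda>i. tp y' i / y' i ^ (m-1)) ` {1..n}"
      then obtain i where i: "i \<in> {1..n}" "q = tp y' i / y' i ^ (m-1)" by blast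
      show "q < r" using y'st[OF i(1)] y'pw[OF i(1)] i(2) by (simp add: divide_less_eq)
    qed
    have r'ge: "tp y' i \<le> r' * y' i ^ (m-1)" if i: "i \<in> {1..n}" for i
    proof -
      have "tp y' i / y' i ^ (m-1) \<le> r'" unfolding r'_def using fin i by auto
      then show ?thesis using y'pw[OF i] by (simp add: divide_le_eq)
    qed
    have r'0: "0 \<le> r'"
    proof -
      have "0 \<le> tp y' 1 / y' 1 ^ (m-1)" using tp_nonneg[of y' 1] y'pos n1 by (simp add: less_imp_le)
      also have "\<dots> \<le> r'" unfolding r'_def using fin n1 by auto
      finally show ?thesis .
    qed
    define y'' where "y'' j = (if j = 0 then r' else if j \<le> n then y' j else 0)" for j
    have agree: "\<And>j. j \<in> {1..n} \<Longrightarrow> y'' j = y' j" by (simp add: y''_def)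
    have "y'' \<in> Kset"
    proof -
      have le1: "y' j \<le> 1" if j: "j \<in> {1..n}" for j
      proof -
        have "y' j \<le> (\<Sum>j\<in>{1..n}. y' j)" using j y'pos by (intro member_le_sum) (auto simp: less_imp_le)
        then show ?thesis using y'sum by simp
      qed
      have "\<forall>i. y'' i \<in> (if i = 0 then {0..Bd} else if i \<le> n then {0..1} else {0})"
        using r'0 r'lt r0 y'pos le1 by (auto simp: y''_def less_imp_le)
      moreover have "(\<Sum>i\<in>{1..n}. y'' i) = 1" using y'sum agree by simp
      moreover have "\<forall>xs\<in>tidx m n. A xs \<noteq> 0 \<longrightarrow> (\<forall>u\<in>set xs. \<forall>w\<in>set xs. qq * y'' u \<le> y'' w)"
      proof (intro ballI impI)
        fix xs u w assume xs: "xs \<in> tidx m n" "A xs \<noteq> 0" and u: "u \<in> set xs" and w: "w \<in> set xs"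
        have "qq * y' u \<le> y' w"
          by (rule LB[where x=y' and r=r', OF _ _ _ xs u w]) (use y'pos r'lt r0 r'ge in auto)
        then show "qq * y'' u \<le> y'' w" using agree tidx_set[OF xs(1)] u w by simp
      qed
      moreover have "\<forall>i\<in>{1..n}. tp y'' i \<le> y'' 0 * y'' i ^ (m-1)"
      proof
        fix i assume i: "i \<in> {1..n}"
        have "tp y'' i = tp y' i" by (rule tp_cong) (simp add: agree)
        then show "tp y'' i \<le> y'' 0 * y'' i ^ (m-1)" using r'ge[OF i] agree[OF i] by (simp add: y''_def)
      qed
      ultimately show ?thesis unfolding Kset_def by blast
    qed
    then have "z 0 \<le> r'" using zmin[of y''] by (simp add: y''_def)
    then show False using r'lt by (simp add: r_def)
  qed
  define v where "v j = (1 / z 1) * z j" for j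
  have z1: "0 < z 1" using zpos n1 by simp
  have "\<forall>j\<in>{1..n}. 0 < v j" using zpos z1 by (simp add: v_def)
  moreover have "v 1 = 1" using z1 by (simp add: v_def)
  moreover have "\<forall>i\<in>{1..n}. tp v i = r * v i ^ (m-1)"
  proof
    fix i assume i: "i \<in> {1..n}"
    have "tp v i = (1 / z 1) ^ (m-1) * tp z i" unfolding v_def by (rule tp_scale)
    also have "\<dots> = r * v i ^ (m-1)" using eig i unfolding v_def power_mult_distrib by simp
    finally show "tp v i = r * v i ^ (m-1)" .
  qed
  ultimately show ?thesis using r0 by blast
qed


definition vv :: "nat \<Rightarrow> real" where
  "vv = (SOME v. \<exists>r. (\<forall>j\<in>{1..n}. 0 < v j) \<and> v 1 = 1 \<and> 0 \<le> r \<and> (\<forall>i\<in>{1..n}. tp v i = r * v i ^ (m-1)))"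
definition rr :: real where
  "rr = (SOME r. (\<forall>j\<in>{1..n}. 0 < vv j) \<and> vv 1 = 1 \<and> 0 \<le> r \<and> (\<forall>i\<in>{1..n}. tp vv i = r * vv i ^ (m-1)))"

lemma vv_rr: "(\<forall>j\<in>{1..n}. 0 < vv j) \<and> vv 1 = 1 \<and> 0 \<le> rr \<and> (\<forall>i\<in>{1..n}. tp vv i = rr * vv i ^ (m-1))"
proof -
  have "\<exists>r. (\<forall>j\<in>{1..n}. 0 < vv j) \<and> vv 1 = 1 \<and> 0 \<le> r \<and> (\<forall>i\<in>{1..n}. tp vv i = r * vv i ^ (m-1))"
    using someI_ex[OF pf_exists] unfolding vv_def .
  then show ?thesis unfolding rr_def by (rule someI_ex)
qed

lemma vv_pos: "j \<in> {1..n} \<Longrightarrow> 0 < vv j" and vv1: "vv 1 = 1" and rr0: "0 \<le> rr"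
  and vv_ev: "i \<in> {1..n} \<Longrightarrow> tp vv i = rr * vv i ^ (m-1)"
  using vv_rr by auto

lemma eig_bound:
  assumes ep: "is_eigenpair m n A lam x"
  shows "cmod lam \<le> rr"
proof -
  define w where "w j = cmod (x j)" for j
  obtain k where k: "k \<in> {1..n}" "x k \<noteq> 0" using ep by (auto simp: is_eigenpair_def)
  define t where "t = Max ((\<lambda>j. w j / vv j) ` {1..n})"
  have fin: "finite ((\<lambda>j. w j / vv j) ` {1..n})" "(\<lambda>j. w j / vv j) ` {1..n} \<noteq> {}" using n1 by auto
  obtain k2 where k2: "k2 \<in> {1..n}" "w k2 / vv k2 = t" using Max_in[OF fin] by (auto simp: t_def)
  have "w k / vv k \<le> t" using fin k unfolding t_def by auto
  moreover have "0 < w k / vv k" using k vv_pos[of k] by (simp add: w_def)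
  ultimately have tpos: "0 < t" by linarith
  have wk2: "w k2 = t * vv k2" using k2 vv_pos[of k2] by (simp add: field_simps)
  have wk2p: "0 < w k2" using wk2 tpos vv_pos[OF k2(1)] by simp
  have tge: "0 \<le> w j \<and> w j \<le> t * vv j" if j: "j \<in> {1..n}" for j
  proof -
    have "w j / vv j \<le> t" using fin j by (auto simp: t_def)
    then show ?thesis using vv_pos[OF j] by (simp add: divide_le_eq w_def)
  qed
  have "cmod lam * w k2 ^ (m-1) = cmod (tensor_apply m n A x k2)"
    using ep k2 by (simp add: is_eigenpair_def norm_mult norm_power w_def)
  also have "\<dots> \<le> tp w k2" unfolding w_def by (rule ta_norm[OF k2(1)])
  also have "\<dots> \<le> tp (\<lambda>j. t * vv j) k2" using tge k2 by (intro tp_mono) auto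
  also have "\<dots> = t ^ (m-1) * (rr * vv k2 ^ (m-1))" by (simp add: tp_scale vv_ev[OF k2(1)])
  also have "\<dots> = rr * w k2 ^ (m-1)" using wk2 by (simp add: power_mult_distrib)
  finally show ?thesis using wk2p by simp
qed

lemma rho_eq: "spectral_radius m n A = rr"
proof -
  have ep: "is_eigenpair m n A (complex_of_real rr) (\<lambda>j. complex_of_real (vv j))"
    unfolding is_eigenpair_def
  proof
    show "\<exists>i\<in>{1..n}. complex_of_real (vv i) \<noteq> 0" using n1 vv1 by (intro bexI[of _ 1]) auto
    show "\<forall>i\<in>{1..n}. tensor_apply m n A (\<lambda>j. complex_of_real (vv j)) i =
       complex_of_real rr * complex_of_real (vv i) ^ (m - 1)"
      using vv_ev by (simp add: ta_real)
  qed
  show ?thesis unfolding spectral_radius_def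
  proof (rule cSup_eq_maximum)
    show "rr \<in> {cmod lam |lam. \<exists>x. is_eigenpair m n A lam x}" using ep rr0 by force
    show "\<And>x. x \<in> {cmod lam |lam. \<exists>x. is_eigenpair m n A lam x} \<Longrightarrow> x \<le> rr" using eig_bound by blast
  qed
qed


lemma PV_eig: "y \<in> PV m n A \<Longrightarrow> i \<in> {1..n} \<Longrightarrow> tensor_apply m n A y i = complex_of_real rr * y i ^ (m-1)"
  by (auto simp: PV_def is_eigenpair_def rho_eq)

lemma PV_abs:
  assumes y: "y \<in> PV m n A" and i: "i \<in> {1..n}"
  shows "cmod (y i) = vv i"
proof -
  define w where "w j = cmod (y j)" for j
  have sup: "rr * w i ^ (m-1) \<le> tp w i" if i: "i \<in> {1..n}" for i
  proof -
    have "rr * w i ^ (m-1) = cmod (tensor_apply m n A y i)"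
      using PV_eig[OF y i] rr0 by (simp add: w_def norm_mult norm_power)
    also have "\<dots> \<le> tp w i" unfolding w_def by (rule ta_norm[OF i])
    finally show ?thesis .
  qed
  obtain t where t: "0 \<le> t" "\<forall>j\<in>{1..n}. w j = t * vv j"
    using cmp[of vv rr w] vv_pos vv_ev sup by (auto simp: w_def)
  have "y 1 = 1" using y by (simp add: PV_def)
  moreover have "w 1 = t * vv 1" using t(2) n1 by auto
  ultimately have "t = 1" using vv1 by (simp add: w_def)
  then show ?thesis using t(2) i by (simp add: w_def)
qed

lemma PV_nz: "y \<in> PV m n A \<Longrightarrow> i \<in> {1..n} \<Longrightarrow> y i \<noteq> 0"
  using PV_abs vv_pos by fastforce

lemma PV_decomp: "y \<in> PV m n A \<Longrightarrow> i \<in> {1..n} \<Longrightarrow> y i = sg (y i) * complex_of_real (vv i)"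
  using sg_mult[of "y i"] PV_abs by simp

lemma PV_prod:
  assumes y: "y \<in> PV m n A" and i: "i \<in> {1..n}" and ys: "ys \<in> tidx (m-1) n" and nz: "A (i # ys) \<noteq> 0"
  shows "prod_list (map (\<lambda>j. sg (y j)) ys) = sg (y i) ^ (m-1)"
proof -
  define u where "u = sg (y i) ^ (m-1)"
  define W where "W zs = complex_of_real (A (i # zs)) * prod_list (map y zs)" for zs
  have u1: "cmod u = 1" using sg_norm[OF PV_nz[OF y i]] by (simp add: u_def norm_power)
  have py: "prod_list (map y zs) = prod_list (map (\<lambda>j. sg (y j)) zs) * complex_of_real (prod_list (map vv zs))"
    if zs: "zs \<in> tidx (m-1) n" for zs
  proof -
    have "prod_list (map y zs) = prod_list (map (\<lambda>j. sg (y j) * complex_of_real (vv j)) zs)"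
      using PV_decomp[OF y] tidx_set[OF zs] by (intro pl_cong) auto
    then show ?thesis by (simp add: pl_mult pl_of_real)
  qed
  have cW: "cmod (W zs) = A (i # zs) * prod_list (map vv zs)" if zs: "zs \<in> tidx (m-1) n" for zs
  proof -
    have "prod_list (map (\<lambda>j. cmod (y j)) zs) = prod_list (map vv zs)"
      using PV_abs[OF y] tidx_set[OF zs] by (intro pl_cong) auto
    then show ?thesis using A_Cons_nonneg[OF i zs] by (simp add: W_def norm_mult pl_norm)
  qed
  have "sum W (tidx (m-1) n) = tensor_apply m n A y i" by (simp add: W_def tensor_apply_def)
  also have "\<dots> = complex_of_real rr * y i ^ (m-1)" by (rule PV_eig[OF y i])
  also have "\<dots> = u * complex_of_real (rr * vv i ^ (m-1))"
    by (subst PV_decomp[OF y i]) (simp add: u_def power_mult_distrib)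
  also have "rr * vv i ^ (m-1) = (\<Sum>zs\<in>tidx (m-1) n. cmod (W zs))"
    using vv_ev[OF i] cW by (simp add: tp_def)
  finally have "\<forall>zs\<in>tidx (m-1) n. W zs = u * complex_of_real (cmod (W zs))"
    by (intro tri_eq tidx_finite u1)
  then have "W ys = u * complex_of_real (cmod (W ys))" using ys by blast
  then have "complex_of_real (A (i # ys)) * prod_list (map (\<lambda>j. sg (y j)) ys) * complex_of_real (prod_list (map vv ys))
     = u * (complex_of_real (A (i # ys)) * complex_of_real (prod_list (map vv ys)))"
    using py[OF ys] cW[OF ys] by (simp add: W_def mult.assoc)
  moreover have "complex_of_real (A (i # ys)) * complex_of_real (prod_list (map vv ys)) \<noteq> 0"
    using nz pl_pos[of ys vv] vv_pos tidx_set[OF ys] by auto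
  ultimately show ?thesis unfolding u_def by (simp add: mult.commute mult.left_commute)
qed

lemma PV_stab:
  assumes y: "y \<in> PV m n A"
  shows "(\<lambda>j\<in>{1..n}. sg (y j)) \<in> stab_set m n A"
proof -
  define D where "D = (\<lambda>j\<in>{1..n}. sg (y j))"
  have "D \<in> {1..n} \<rightarrow>\<^sub>E (UNIV - {0})" using sg_nz PV_nz[OF y] by (auto simp: D_def)
  moreover have "D 1 = 1" using y n1 by (simp add: D_def PV_def sg_def)
  moreover have "\<forall>xs\<in>tidx m n. complex_of_real (A xs) =
        inverse (D (hd xs)) ^ (m - 1) * complex_of_real (A xs) * prod_list (map D (tl xs))"
  proof
    fix xs assume xs: "xs \<in> tidx m n"
    have sp: "xs = hd xs # tl xs" "hd xs \<in> {1..n}" "tl xs \<in> tidx (m-1) n" using tidx_split[OF xs] by auto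
    show "complex_of_real (A xs) = inverse (D (hd xs)) ^ (m - 1) * complex_of_real (A xs) * prod_list (map D (tl xs))"
    proof (cases "A xs = 0")
      case False
      have "prod_list (map D (tl xs)) = prod_list (map (\<lambda>j. sg (y j)) (tl xs))"
        using tidx_set[OF sp(3)] by (intro pl_cong) (auto simp: D_def)
      also have "\<dots> = sg (y (hd xs)) ^ (m-1)" using PV_prod[OF y sp(2,3)] False sp(1) by metis
      finally have "prod_list (map D (tl xs)) = D (hd xs) ^ (m-1)" using sp(2) by (simp add: D_def)
      moreover have "D (hd xs) \<noteq> 0" using sp(2) sg_nz PV_nz[OF y] by (simp add: D_def)
      ultimately show ?thesis by (simp add: power_inverse[symmetric] field_simps)
    qed simp
  qed
  ultimately show ?thesis unfolding D_def stab_set_def by blast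
qed

lemma stab_prod:
  assumes D: "D \<in> stab_set m n A" and xs: "xs \<in> tidx m n" and nz: "A xs \<noteq> 0"
  shows "prod_list (map D (tl xs)) = D (hd xs) ^ (m-1)" "D (hd xs) \<noteq> 0"
proof -
  have sp: "hd xs \<in> {1..n}" using tidx_split[OF xs] by auto
  show dnz: "D (hd xs) \<noteq> 0" using D sp by (auto simp: stab_set_def PiE_def)
  have "complex_of_real (A xs) = inverse (D (hd xs)) ^ (m - 1) * complex_of_real (A xs) * prod_list (map D (tl xs))"
    using D xs by (auto simp: stab_set_def)
  then have "1 = inverse (D (hd xs)) ^ (m - 1) * prod_list (map D (tl xs))" using nz by simp
  then show "prod_list (map D (tl xs)) = D (hd xs) ^ (m-1)"
    using dnz by (simp add: power_inverse[symmetric] field_simps)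
qed

lemma stab_PV:
  assumes D: "D \<in> stab_set m n A"
  shows "(\<lambda>j\<in>{1..n}. D j * complex_of_real (vv j)) \<in> PV m n A"
proof -
  define y where "y = (\<lambda>j\<in>{1..n}. D j * complex_of_real (vv j))"
  have D1: "D 1 = 1" using D by (simp add: stab_set_def)
  have y1: "y 1 = 1" using n1 D1 vv1 by (simp add: y_def)
  have "tensor_apply m n A y i = complex_of_real rr * y i ^ (m-1)" if i: "i \<in> {1..n}" for i
  proof -
    have "tensor_apply m n A y i = (\<Sum>ys\<in>tidx (m-1) n. D i ^ (m-1) * complex_of_real (A (i # ys) * prod_list (map vv ys)))"
      unfolding tensor_apply_def
    proof (intro sum.cong refl)
      fix ys assume ys: "ys \<in> tidx (m-1) n"
      have py: "prod_list (map y ys) = prod_list (map D ys) * complex_of_real (prod_list (map vv ys))"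
      proof -
        have "prod_list (map y ys) = prod_list (map (\<lambda>j. D j * complex_of_real (vv j)) ys)"
          using tidx_set[OF ys] by (intro pl_cong) (auto simp: y_def)
        then show ?thesis by (simp add: pl_mult pl_of_real)
      qed
      show "complex_of_real (A (i # ys)) * prod_list (map y ys) =
         D i ^ (m-1) * complex_of_real (A (i # ys) * prod_list (map vv ys))"
      proof (cases "A (i # ys) = 0")
        case False
        have "prod_list (map D ys) = D i ^ (m-1)" using stab_prod(1)[OF D tidx_Cons[OF i ys] False] by simp
        then show ?thesis using py by simp
      qed simp
    qed
    also have "\<dots> = D i ^ (m-1) * complex_of_real (tp vv i)"
      by (simp add: tp_def sum_distrib_left)
    also have "\<dots> = complex_of_real rr * y i ^ (m-1)" using vv_ev[OF i] i
      by (simp add: y_def power_mult_distrib)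
    finally show ?thesis .
  qed
  then have "is_eigenpair m n A (complex_of_real (spectral_radius m n A)) y"
    using y1 n1 by (auto simp: is_eigenpair_def rho_eq intro!: bexI[of _ 1])
  then show ?thesis using y1 by (simp add: PV_def y_def)
qed

lemma stab_pow:
  assumes D: "D \<in> stab_set m n A" and i: "i \<in> {1..n}"
  shows "D i ^ m = 1"
proof -
  have arc: "D a ^ m = D b ^ m" if ab: "(a, b) \<in> tensor_digraph m n A" for a b
  proof -
    obtain xs where xs: "xs \<in> tidx m n" "A xs \<noteq> 0" "hd xs = a" "b \<in> set xs"
      using arc_edge[OF ab] by blast
    have sp: "xs = hd xs # tl xs" using tidx_split[OF xs(1)] by auto
    have "prod_list (map D xs) = D a * D a ^ (m-1)"
      using stab_prod(1)[OF D xs(1,2)] sp xs(3) by (metis list.simps(9) prod_list.Cons)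
    also have "\<dots> = D a ^ m" using m2 by (simp add: power_Suc[symmetric])
    finally have pa: "prod_list (map D xs) = D a ^ m" .
    define xs' where "xs' = b # remove1 b xs"
    have ph: "xs' \<in> tidx m n" "A xs' \<noteq> 0" "mset xs' = mset xs" using perm_head[OF xs(1,2,4)] by (auto simp: xs'_def)
    have "prod_list (map D xs') = D b * D b ^ (m-1)"
      using stab_prod(1)[OF D ph(1,2)] by (simp add: xs'_def)
    also have "\<dots> = D b ^ m" using m2 by (simp add: power_Suc[symmetric])
    finally have "prod_list (map D xs') = D b ^ m" .
    moreover have "prod_list (map D xs') = prod_list (map D xs)" using ph(3) by (rule pl_mset)
    ultimately show ?thesis using pa by simp
  qed
  have "(1, i) \<in> (tensor_digraph m n A)\<^sup>*" using conn n1 i by auto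
  then show ?thesis
  proof (induction rule: rtrancl_induct)
    case base then show ?case using D by (simp add: stab_set_def)
  next
    case (step b c) then show ?case using arc by metis
  qed
qed

lemma stab_finite: "finite (stab_set m n A)"
proof (rule finite_subset)
  show "stab_set m n A \<subseteq> {1..n} \<rightarrow>\<^sub>E {z. z ^ m = 1}"
    using stab_pow by (auto simp: stab_set_def PiE_def Pi_def)
  show "finite ({1..n} \<rightarrow>\<^sub>E {z::complex. z ^ m = 1})"
    using m2 by (intro finite_PiE finite_roots_unity) auto
qed

lemma PV_finite: "finite (PV m n A)"
proof (rule finite_subset)
  show "PV m n A \<subseteq> (\<lambda>D. \<lambda>j\<in>{1..n}. D j * complex_of_real (vv j)) ` stab_set m n A"
  proof
    fix y assume y: "y \<in> PV m n A"
    have "y = (\<lambda>j\<in>{1..n}. (\<lambda>j\<in>{1..n}. sg (y j)) j * complex_of_real (vv j))"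
    proof
      fix j show "y j = (\<lambda>j\<in>{1..n}. (\<lambda>j\<in>{1..n}. sg (y j)) j * complex_of_real (vv j)) j"
        using y PV_decomp[OF y, of j] by (cases "j \<in> {1..n}") (auto simp: PV_def PiE_def extensional_def)
    qed
    then show "y \<in> (\<lambda>D. \<lambda>j\<in>{1..n}. D j * complex_of_real (vv j)) ` stab_set m n A"
      using PV_stab[OF y] by blast
  qed
  show "finite ((\<lambda>D. \<lambda>j\<in>{1..n}. D j * complex_of_real (vv j)) ` stab_set m n A)"
    using stab_finite by simp
qed

definition vvc :: "nat \<Rightarrow> complex" where "vvc = (\<lambda>j\<in>{1..n}. complex_of_real (vv j))"

lemma vvc_PV: "vvc \<in> PV m n A"
proof -
  have "(\<lambda>j\<in>{1..n}. (1::complex)) \<in> stab_set m n A"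
    unfolding stab_set_def
  proof (intro CollectI conjI ballI)
    show "(\<lambda>j\<in>{1..n}. (1::complex)) \<in> {1..n} \<rightarrow>\<^sub>E (UNIV - {0})" by auto
    show "(\<lambda>j\<in>{1..n}. (1::complex)) 1 = 1" using n1 by simp
    fix xs assume xs: "xs \<in> tidx m n"
    have sp: "xs = hd xs # tl xs" "hd xs \<in> {1..n}" "tl xs \<in> tidx (m-1) n" using tidx_split[OF xs] by auto
    have "prod_list (map (\<lambda>j\<in>{1..n}. (1::complex)) (tl xs)) = prod_list (map (\<lambda>_. 1::complex) (tl xs))"
      using tidx_set[OF sp(3)] by (intro pl_cong) auto
    then show "complex_of_real (A xs) = inverse ((\<lambda>j\<in>{1..n}. (1::complex)) (hd xs)) ^ (m - 1) *
        complex_of_real (A xs) * prod_list (map (\<lambda>j\<in>{1..n}. (1::complex)) (tl xs))"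
      using sp(2) by (simp add: pl_one_c)
  qed
  from stab_PV[OF this] have "(\<lambda>j\<in>{1..n}. (\<lambda>j\<in>{1..n}. (1::complex)) j * complex_of_real (vv j)) \<in> PV m n A" .
  moreover have "(\<lambda>j\<in>{1..n}. (\<lambda>j\<in>{1..n}. (1::complex)) j * complex_of_real (vv j)) = vvc"
    unfolding vvc_def by (intro restrict_ext) simp
  ultimately show ?thesis by simp
qed

lemma vpos_eq: "vpos m n A = vvc"
  unfolding vpos_def
proof (rule the_equality)
  show "vvc \<in> PV m n A \<and> (\<forall>i\<in>{1..n}. Im (vvc i) = 0 \<and> 0 < Re (vvc i))"
    using vvc_PV vv_pos by (simp add: vvc_def)
  fix y assume y: "y \<in> PV m n A \<and> (\<forall>i\<in>{1..n}. Im (y i) = 0 \<and> 0 < Re (y i))"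
  show "y = vvc"
  proof
    fix j show "y j = vvc j"
    proof (cases "j \<in> {1..n}")
      case True
      have "cmod (y j) = vv j" using PV_abs y True by blast
      moreover have "y j = complex_of_real (Re (y j))" using y True by (simp add: complex_eq_iff)
      ultimately have "y j = complex_of_real (vv j)" using y True by (metis norm_of_real abs_of_pos)
      then show ?thesis using True by (simp add: vvc_def)
    next
      case False then show ?thesis using y by (auto simp: vvc_def PV_def PiE_def extensional_def)
    qed
  qed
qed

end


section \<open>Stabilizing sets as groups\<close>

lemma tidx_hd_tl:
  assumes "2 \<le> m" "xs \<in> tidx m n"
  shows "xs = hd xs # tl xs" "hd xs \<in> {1..n}" "\<And>j. j \<in> set (tl xs) \<Longrightarrow> j \<in> {1..n}"
proof -
  have len: "length xs = m" and st: "set xs \<subseteq> {1..n}" using assms(2) by (auto simp: tidx_def)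
  have ne: "xs \<noteq> []" using len assms(1) by auto
  show "xs = hd xs # tl xs" using ne by simp
  have "hd xs \<in> set xs" using ne by simp
  then show "hd xs \<in> {1..n}" using st by blast
  fix j assume "j \<in> set (tl xs)"
  then have "j \<in> set xs" using ne by (simp add: list.set_sel(2))
  then show "j \<in> {1..n}" using st by blast
qed

lemma stab_eq_aux:
  fixes c P :: complex and b :: real
  assumes c: "c \<noteq> 0"
  shows "(complex_of_real b = inverse c ^ k * complex_of_real b * P) \<longleftrightarrow> (b \<noteq> 0 \<longrightarrow> P = c ^ k)"
proof (cases "b = 0")
  case False
  have ck: "c ^ k \<noteq> 0" using c by simp
  have "inverse c ^ k * complex_of_real b * P = complex_of_real b * P / c ^ k"
    by (simp add: power_inverse[symmetric] divide_inverse mult.commute mult.left_commute)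
  then have "(complex_of_real b = inverse c ^ k * complex_of_real b * P) \<longleftrightarrow>
      complex_of_real b = complex_of_real b * P / c ^ k" by simp
  also have "\<dots> \<longleftrightarrow> complex_of_real b * c ^ k = complex_of_real b * P"
    by (rule nonzero_eq_divide_eq[OF ck])
  also have "\<dots> \<longleftrightarrow> P = c ^ k" using False by auto
  finally show ?thesis using False by simp
qed simp

lemma stab_mem:
  assumes m2: "2 \<le> m"
  shows "d \<in> stab_set m n B \<longleftrightarrow> d \<in> {1..n} \<rightarrow>\<^sub>E (UNIV - {0}) \<and> d 1 = 1 \<and>
     (\<forall>xs\<in>tidx m n. B xs \<noteq> 0 \<longrightarrow> prod_list (map d (tl xs)) = d (hd xs) ^ (m-1))"
proof -
  have eqv: "(complex_of_real (B xs) = inverse (d (hd xs)) ^ (m - 1) * complex_of_real (B xs) * prod_list (map d (tl xs)))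
     \<longleftrightarrow> (B xs \<noteq> 0 \<longrightarrow> prod_list (map d (tl xs)) = d (hd xs) ^ (m-1))"
    if d: "d \<in> {1..n} \<rightarrow>\<^sub>E (UNIV - {0})" and xs: "xs \<in> tidx m n" for xs
  proof -
    have "d (hd xs) \<noteq> 0" using d tidx_hd_tl(2)[OF m2 xs] by auto
    then show ?thesis by (rule stab_eq_aux)
  qed
  show ?thesis unfolding stab_set_def using eqv by auto
qed

definition SG :: "nat \<Rightarrow> nat \<Rightarrow> tensor \<Rightarrow> (nat \<Rightarrow> complex) monoid" where
  "SG m n B = \<lparr>carrier = stab_set m n B, mult = (\<lambda>d e. \<lambda>i\<in>{1..n}. d i * e i), one = (\<lambda>i\<in>{1..n}. 1)\<rparr>"

lemma stab_mult:
  assumes m2: "2 \<le> m" and n1: "1 \<le> n" and d: "d \<in> stab_set m n B" and e: "e \<in> stab_set m n B"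
  shows "(\<lambda>i\<in>{1..n}. d i * e i) \<in> stab_set m n B"
proof -
  have D: "d \<in> {1..n} \<rightarrow>\<^sub>E (UNIV - {0})" "d 1 = 1" "\<forall>xs\<in>tidx m n. B xs \<noteq> 0 \<longrightarrow> prod_list (map d (tl xs)) = d (hd xs) ^ (m-1)"
    and E: "e \<in> {1..n} \<rightarrow>\<^sub>E (UNIV - {0})" "e 1 = 1" "\<forall>xs\<in>tidx m n. B xs \<noteq> 0 \<longrightarrow> prod_list (map e (tl xs)) = e (hd xs) ^ (m-1)"
    using d e stab_mem[OF m2] by auto
  show ?thesis unfolding stab_mem[OF m2]
  proof (intro conjI ballI impI)
    show "(\<lambda>i\<in>{1..n}. d i * e i) \<in> {1..n} \<rightarrow>\<^sub>E (UNIV - {0})" using D(1) E(1) by (force simp: PiE_iff)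
    show "(\<lambda>i\<in>{1..n}. d i * e i) 1 = 1" using n1 D(2) E(2) by simp
    fix xs assume xs: "xs \<in> tidx m n" "B xs \<noteq> 0"
    have "prod_list (map (\<lambda>i\<in>{1..n}. d i * e i) (tl xs)) = prod_list (map (\<lambda>i. d i * e i) (tl xs))"
      using tidx_hd_tl(3)[OF m2 xs(1)] by (intro pl_cong) auto
    also have "\<dots> = d (hd xs) ^ (m-1) * e (hd xs) ^ (m-1)" using D(3) E(3) xs by (simp add: pl_mult)
    finally show "prod_list (map (\<lambda>i\<in>{1..n}. d i * e i) (tl xs)) = (\<lambda>i\<in>{1..n}. d i * e i) (hd xs) ^ (m - 1)"
      using tidx_hd_tl(2)[OF m2 xs(1)] by (simp add: power_mult_distrib)
  qed
qed

lemma stab_inv: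
  assumes m2: "2 \<le> m" and n1: "1 \<le> n" and d: "d \<in> stab_set m n B"
  shows "(\<lambda>i\<in>{1..n}. inverse (d i)) \<in> stab_set m n B"
proof -
  have D: "d \<in> {1..n} \<rightarrow>\<^sub>E (UNIV - {0})" "d 1 = 1" "\<forall>xs\<in>tidx m n. B xs \<noteq> 0 \<longrightarrow> prod_list (map d (tl xs)) = d (hd xs) ^ (m-1)"
    using d stab_mem[OF m2] by auto
  show ?thesis unfolding stab_mem[OF m2]
  proof (intro conjI ballI impI)
    show "(\<lambda>i\<in>{1..n}. inverse (d i)) \<in> {1..n} \<rightarrow>\<^sub>E (UNIV - {0})" using D(1) by auto
    show "(\<lambda>i\<in>{1..n}. inverse (d i)) 1 = 1" using n1 D(2) by simp
    fix xs assume xs: "xs \<in> tidx m n" "B xs \<noteq> 0"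
    have "prod_list (map (\<lambda>i\<in>{1..n}. inverse (d i)) (tl xs)) = prod_list (map (\<lambda>i. inverse (d i)) (tl xs))"
      using tidx_hd_tl(3)[OF m2 xs(1)] by (intro pl_cong) auto
    also have "\<dots> = inverse (d (hd xs) ^ (m-1))" using D(3) xs by (simp add: pl_inverse)
    finally show "prod_list (map (\<lambda>i\<in>{1..n}. inverse (d i)) (tl xs)) = (\<lambda>i\<in>{1..n}. inverse (d i)) (hd xs) ^ (m - 1)"
      using tidx_hd_tl(2)[OF m2 xs(1)] by (simp add: power_inverse)
  qed
qed

lemma stab_one:
  assumes m2: "2 \<le> m" and n1: "1 \<le> n"
  shows "(\<lambda>i\<in>{1..n}. (1::complex)) \<in> stab_set m n B"
  unfolding stab_mem[OF m2]
proof (intro conjI ballI impI)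
  show "(\<lambda>i\<in>{1..n}. (1::complex)) \<in> {1..n} \<rightarrow>\<^sub>E (UNIV - {0})" by auto
  show "(\<lambda>i\<in>{1..n}. (1::complex)) 1 = 1" using n1 by simp
  fix xs assume xs: "xs \<in> tidx m n" "B xs \<noteq> 0"
  have "prod_list (map (\<lambda>i\<in>{1..n}. (1::complex)) (tl xs)) = prod_list (map (\<lambda>_. 1::complex) (tl xs))"
    using tidx_hd_tl(3)[OF m2 xs(1)] by (intro pl_cong) auto
  then show "prod_list (map (\<lambda>i\<in>{1..n}. (1::complex)) (tl xs)) = (\<lambda>i\<in>{1..n}. (1::complex)) (hd xs) ^ (m - 1)"
    using tidx_hd_tl(2)[OF m2 xs(1)] by (simp add: pl_one_c)
qed

lemma stab_ext: "d \<in> stab_set m n B \<Longrightarrow> d \<in> extensional {1..n}"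
  by (auto simp: stab_set_def PiE_def)

lemma SG_group:
  assumes m2: "2 \<le> m" and n1: "1 \<le> n"
  shows "group (SG m n B)"
proof (rule groupI)
  fix x y assume "x \<in> carrier (SG m n B)" "y \<in> carrier (SG m n B)"
  then show "x \<otimes>\<^bsub>SG m n B\<^esub> y \<in> carrier (SG m n B)" using stab_mult[OF m2 n1] by (simp add: SG_def)
next
  show "\<one>\<^bsub>SG m n B\<^esub> \<in> carrier (SG m n B)" using stab_one[OF m2 n1] by (simp add: SG_def)
next
  fix x y z assume "x \<in> carrier (SG m n B)" "y \<in> carrier (SG m n B)" "z \<in> carrier (SG m n B)"
  show "x \<otimes>\<^bsub>SG m n B\<^esub> y \<otimes>\<^bsub>SG m n B\<^esub> z = x \<otimes>\<^bsub>SG m n B\<^esub> (y \<otimes>\<^bsub>SG m n B\<^esub> z)"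
    by (auto simp: SG_def mult.assoc)
next
  fix x assume "x \<in> carrier (SG m n B)"
  then have "x \<in> stab_set m n B" by (simp add: SG_def)
  then have "x \<in> extensional {1..n}" by (rule stab_ext)
  then show "\<one>\<^bsub>SG m n B\<^esub> \<otimes>\<^bsub>SG m n B\<^esub> x = x" by (auto simp: SG_def extensional_def)
next
  fix x assume x: "x \<in> carrier (SG m n B)"
  then have xs: "x \<in> stab_set m n B" by (simp add: SG_def)
  have "\<forall>i\<in>{1..n}. x i \<noteq> 0" using xs by (auto simp: stab_set_def PiE_def)
  then have "(\<lambda>i\<in>{1..n}. inverse (x i)) \<otimes>\<^bsub>SG m n B\<^esub> x = \<one>\<^bsub>SG m n B\<^esub>"
    by (auto simp: SG_def)
  moreover have "(\<lambda>i\<in>{1..n}. inverse (x i)) \<in> carrier (SG m n B)" using stab_inv[OF m2 n1 xs] by (simp add: SG_def)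
  ultimately show "\<exists>y\<in>carrier (SG m n B). y \<otimes>\<^bsub>SG m n B\<^esub> x = \<one>\<^bsub>SG m n B\<^esub>" by blast
qed

lemma stab_sub:
  assumes m2: "2 \<le> m" and sp: "sp_le m n Ahat A"
  shows "stab_set m n A \<subseteq> stab_set m n Ahat"
proof
  fix d assume "d \<in> stab_set m n A"
  then have d: "d \<in> {1..n} \<rightarrow>\<^sub>E (UNIV - {0})" "d 1 = 1"
     "\<forall>xs\<in>tidx m n. A xs \<noteq> 0 \<longrightarrow> prod_list (map d (tl xs)) = d (hd xs) ^ (m-1)"
    unfolding stab_mem[OF m2] by auto
  have "\<forall>xs\<in>tidx m n. Ahat xs \<noteq> 0 \<longrightarrow> prod_list (map d (tl xs)) = d (hd xs) ^ (m-1)"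
    using d(3) sp unfolding sp_le_def by blast
  then show "d \<in> stab_set m n Ahat" unfolding stab_mem[OF m2] using d(1,2) by blast
qed

lemma stab_index_dvd:
  assumes m2: "2 \<le> m" and n1: "1 \<le> n" and sp: "sp_le m n Ahat A"
  shows "stab_index m n A dvd stab_index m n Ahat"
proof -
  interpret G: group "SG m n Ahat" by (rule SG_group[OF m2 n1])
  have "subgroup (stab_set m n A) (SG m n Ahat)"
  proof (rule G.subgroupI)
    show "stab_set m n A \<subseteq> carrier (SG m n Ahat)" using stab_sub[OF m2 sp] by (simp add: SG_def)
    show "stab_set m n A \<noteq> {}" using stab_one[OF m2 n1] by blast
  next
    fix a assume a: "a \<in> stab_set m n A"
    have ac: "a \<in> carrier (SG m n Ahat)" using a stab_sub[OF m2 sp] by (auto simp: SG_def)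
    have ic: "(\<lambda>i\<in>{1..n}. inverse (a i)) \<in> carrier (SG m n Ahat)"
      using stab_inv[OF m2 n1] ac by (simp add: SG_def)
    have "\<forall>i\<in>{1..n}. a i \<noteq> 0" using a by (auto simp: stab_set_def PiE_def)
    then have "(\<lambda>i\<in>{1..n}. inverse (a i)) \<otimes>\<^bsub>SG m n Ahat\<^esub> a = \<one>\<^bsub>SG m n Ahat\<^esub>" by (auto simp: SG_def)
    then have "inv\<^bsub>SG m n Ahat\<^esub> a = (\<lambda>i\<in>{1..n}. inverse (a i))" using G.inv_equality ac ic by blast
    then show "inv\<^bsub>SG m n Ahat\<^esub> a \<in> stab_set m n A" using stab_inv[OF m2 n1 a] by simp
  next
    fix a b assume "a \<in> stab_set m n A" "b \<in> stab_set m n A"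
    then show "a \<otimes>\<^bsub>SG m n Ahat\<^esub> b \<in> stab_set m n A" using stab_mult[OF m2 n1] by (simp add: SG_def)
  qed
  then have "card (rcosets\<^bsub>SG m n Ahat\<^esub> stab_set m n A) * card (stab_set m n A) = order (SG m n Ahat)"
    by (rule G.lagrange)
  moreover have "order (SG m n Ahat) = stab_index m n Ahat" by (simp add: order_def SG_def stab_index_def)
  ultimately show ?thesis unfolding stab_index_def by (metis dvd_triv_right)
qed


section \<open>PS0\<close>

lemma sum_mod_add: "(\<Sum>j\<in>S. c j * ((x j + y j) mod (m::nat))) mod m =
   ((\<Sum>j\<in>S. c j * x j) mod m + (\<Sum>j\<in>S. c j * y j) mod m) mod m"
proof -
  have "(\<Sum>j\<in>S. c j * ((x j + y j) mod m)) mod m = (\<Sum>j\<in>S. c j * ((x j + y j) mod m) mod m) mod m"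
    by (rule mod_sum_eq[symmetric])
  also have "\<dots> = (\<Sum>j\<in>S. c j * (x j + y j) mod m) mod m"
    by (intro arg_cong[where f="\<lambda>t. t mod m"] sum.cong refl mod_mult_right_eq)
  also have "\<dots> = (\<Sum>j\<in>S. c j * (x j + y j)) mod m" by (rule mod_sum_eq)
  also have "\<dots> = ((\<Sum>j\<in>S. c j * x j) + (\<Sum>j\<in>S. c j * y j)) mod m"
    by (simp add: distrib_left sum.distrib)
  also have "\<dots> = ((\<Sum>j\<in>S. c j * x j) mod m + (\<Sum>j\<in>S. c j * y j) mod m) mod m"
    by (rule mod_add_eq[symmetric])
  finally show ?thesis .
qed

lemma sum_mod_scal: "(\<Sum>j\<in>S. c j * ((k * x j) mod (m::nat))) mod m = (k * ((\<Sum>j\<in>S. c j * x j) mod m)) mod m"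
proof -
  have "(\<Sum>j\<in>S. c j * ((k * x j) mod m)) mod m = (\<Sum>j\<in>S. c j * ((k * x j) mod m) mod m) mod m"
    by (rule mod_sum_eq[symmetric])
  also have "\<dots> = (\<Sum>j\<in>S. c j * (k * x j) mod m) mod m"
    by (intro arg_cong[where f="\<lambda>t. t mod m"] sum.cong refl mod_mult_right_eq)
  also have "\<dots> = (\<Sum>j\<in>S. c j * (k * x j)) mod m" by (rule mod_sum_eq)
  also have "\<dots> = (k * (\<Sum>j\<in>S. c j * x j)) mod m"
    by (simp add: sum_distrib_left mult.left_commute)
  also have "\<dots> = (k * ((\<Sum>j\<in>S. c j * x j) mod m)) mod m"
    by (rule mod_mult_right_eq[symmetric])
  finally show ?thesis .
qed

lemma PS0_sub:
  assumes m2: "2 \<le> m" and n1: "1 \<le> n" and sp: "sp_le m n Ahat A"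
  shows "zm_submodule m n (PS0 m n A) (PS0 m n Ahat)"
proof -
  have es: "edge_set m n Ahat \<subseteq> edge_set m n A" using sp by (auto simp: edge_set_def sp_le_def)
  have sub: "PS0 m n A \<subseteq> PS0 m n Ahat" using es by (auto simp: PS0_def)
  have zm: "PS0 m n Ahat \<subseteq> zm_vectors m n" by (auto simp: PS0_def)
  have zero: "(\<lambda>i\<in>{1..n}. 0) \<in> PS0 m n A"
    using m2 n1 by (auto simp: PS0_def zm_vectors_def)
  have add: "(\<lambda>i\<in>{1..n}. (x i + y i) mod m) \<in> PS0 m n A" if x: "x \<in> PS0 m n A" and y: "y \<in> PS0 m n A" for x y
  proof -
    have "(\<lambda>i\<in>{1..n}. (x i + y i) mod m) \<in> zm_vectors m n" using m2 by (auto simp: zm_vectors_def)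
    moreover have "(\<Sum>j = 1..n. incidence e j * (\<lambda>i\<in>{1..n}. (x i + y i) mod m) j) mod m = 0"
      if e: "e \<in> edge_set m n A" for e
    proof -
      have "(\<Sum>j = 1..n. incidence e j * (\<lambda>i\<in>{1..n}. (x i + y i) mod m) j) =
          (\<Sum>j = 1..n. incidence e j * ((x j + y j) mod m))" by (intro sum.cong) auto
      then show ?thesis using x y e by (simp add: sum_mod_add PS0_def)
    qed
    moreover have "(\<lambda>i\<in>{1..n}. (x i + y i) mod m) 1 = 0" using x y n1 by (simp add: PS0_def)
    ultimately show ?thesis unfolding PS0_def by blast
  qed
  have scal: "(\<lambda>i\<in>{1..n}. (k * x i) mod m) \<in> PS0 m n A" if x: "x \<in> PS0 m n A" for x k
  proof -
    have "(\<lambda>i\<in>{1..n}. (k * x i) mod m) \<in> zm_vectors m n" using m2 by (auto simp: zm_vectors_def)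
    moreover have "(\<Sum>j = 1..n. incidence e j * (\<lambda>i\<in>{1..n}. (k * x i) mod m) j) mod m = 0"
      if e: "e \<in> edge_set m n A" for e
    proof -
      have "(\<Sum>j = 1..n. incidence e j * (\<lambda>i\<in>{1..n}. (k * x i) mod m) j) =
          (\<Sum>j = 1..n. incidence e j * ((k * x j) mod m))" by (intro sum.cong) auto
      then show ?thesis using x e by (simp add: sum_mod_scal PS0_def)
    qed
    moreover have "(\<lambda>i\<in>{1..n}. (k * x i) mod m) 1 = 0" using x n1 by (simp add: PS0_def)
    ultimately show ?thesis unfolding PS0_def by blast
  qed
  show ?thesis unfolding zm_submodule_def using sub zm zero add scal by blast
qed

section \<open>Stabilizing dimension\<close>

lemma pv_op_sg: "pv_op m n B y z = (\<lambda>i\<in>{1..n}. sg (y i) * sg (z i) * vpos m n B i)"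
  by (simp add: pv_op_def sg_def)

lemma image_psubset: "inj_on f C \<Longrightarrow> X \<subset> Y \<Longrightarrow> Y \<subseteq> C \<Longrightarrow> f ` X \<subset> f ` Y"
proof -
  assume inj: "inj_on f C" and XY: "X \<subset> Y" and YC: "Y \<subseteq> C"
  obtain y where y: "y \<in> Y" "y \<notin> X" using XY by blast
  have "f y \<notin> f ` X"
  proof
    assume "f y \<in> f ` X"
    then obtain x where x: "x \<in> X" "f x = f y" by (metis imageE)
    then have "x = y" using inj XY YC y(1) by (meson inj_onD psubsetD subsetD)
    then show False using x y by simp
  qed
  then show ?thesis using XY y by blast
qed

lemma chain_bound:
  assumes fin: "finite (PV m n B)"
    and H: "\<forall>j\<le>k. pv_submodule m n B (H j)" "\<forall>j<k. H j \<subset> H (Suc j)"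
  shows "k \<le> card (PV m n B)"
proof -
  have sub: "\<And>j. j \<le> k \<Longrightarrow> H j \<subseteq> PV m n B" using H(1) by (auto simp: pv_submodule_def)
  have "j \<le> card (H j)" if "j \<le> k" for j
    using that
  proof (induction j)
    case (Suc j)
    have "card (H j) < card (H (Suc j))"
      using H(2) Suc.prems finite_subset[OF sub[OF Suc.prems] fin] by (intro psubset_card_mono) auto
    then show ?case using Suc by simp
  qed simp
  moreover have "card (H k) \<le> card (PV m n B)" using sub[of k] fin by (intro card_mono) auto
  ultimately show ?thesis by fastforce
qed

lemma stab_dim_le:
  assumes pa: "pt m n A" and pb: "pt m n Ahat" and sp: "sp_le m n Ahat A"
  shows "stab_dim m n A \<le> stab_dim m n Ahat"
proof -
  interpret a: pt m n A by (rule pa)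
  interpret b: pt m n Ahat by (rule pb)
  define \<Phi> where "\<Phi> y = (\<lambda>i\<in>{1..n}. sg (y i) * complex_of_real (b.vv i))" for y
  have PVext: "y j = undefined" if "y \<in> PV m n B" "j \<notin> {1..n}" for y j B
    using that by (auto simp: PV_def PiE_def extensional_def)
  have \<Phi>_PV: "\<Phi> y \<in> PV m n Ahat" if y: "y \<in> PV m n A" for y
  proof -
    have "(\<lambda>j\<in>{1..n}. sg (y j)) \<in> stab_set m n Ahat" using a.PV_stab[OF y] stab_sub[OF a.m2 sp] by blast
    from b.stab_PV[OF this] have "(\<lambda>j\<in>{1..n}. (\<lambda>j\<in>{1..n}. sg (y j)) j * complex_of_real (b.vv j)) \<in> PV m n Ahat" .
    moreover have "(\<lambda>j\<in>{1..n}. (\<lambda>j\<in>{1..n}. sg (y j)) j * complex_of_real (b.vv j)) = \<Phi> y"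
      unfolding \<Phi>_def by (intro restrict_ext) simp
    ultimately show ?thesis by simp
  qed
  have \<Phi>_inj: "inj_on \<Phi> (PV m n A)"
  proof (rule inj_onI)
    fix y y' assume y: "y \<in> PV m n A" and y': "y' \<in> PV m n A" and eq: "\<Phi> y = \<Phi> y'"
    show "y = y'"
    proof
      fix j show "y j = y' j"
      proof (cases "j \<in> {1..n}")
        case True
        have "sg (y j) * complex_of_real (b.vv j) = sg (y' j) * complex_of_real (b.vv j)"
          using fun_cong[OF eq, of j] True by (simp add: \<Phi>_def)
        then have "sg (y j) = sg (y' j)" using b.vv_pos[OF True] by simp
        then show ?thesis using a.PV_decomp[OF y True] a.PV_decomp[OF y' True] by simp
      next
        case False then show ?thesis using PVext y y' by metis
      qed
    qed
  qed
  have sg_vvc: "sg (a.vvc i) = 1" "sg (b.vvc i) = 1" if "i \<in> {1..n}" for i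
    using sg_pos_real[of "a.vv i" 1] sg_pos_real[of "b.vv i" 1] a.vv_pos[OF that] b.vv_pos[OF that] that
    by (simp_all add: a.vvc_def b.vvc_def)
  have \<Phi>_v: "\<Phi> (vpos m n A) = vpos m n Ahat"
    unfolding a.vpos_eq b.vpos_eq \<Phi>_def b.vvc_def by (intro restrict_ext) (simp add: sg_vvc)
  have \<Phi>_op: "\<Phi> (pv_op m n A y z) = pv_op m n Ahat (\<Phi> y) (\<Phi> z)"
    if y: "y \<in> PV m n A" and z: "z \<in> PV m n A" for y z
    unfolding pv_op_sg a.vpos_eq b.vpos_eq \<Phi>_def
  proof (intro restrict_ext)
    fix i assume i: "i \<in> {1..n}"
    have u: "cmod (sg (y i) * sg (z i)) = 1"
      using sg_norm[OF a.PV_nz[OF y i]] sg_norm[OF a.PV_nz[OF z i]] by (simp add: norm_mult)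
    have l: "sg ((\<lambda>i\<in>{1..n}. sg (y i) * sg (z i) * a.vvc i) i) = sg (y i) * sg (z i)"
      using sg_pos_real[OF a.vv_pos[OF i] u] i by (simp add: a.vvc_def)
    have r1: "sg ((\<lambda>i\<in>{1..n}. sg (y i) * complex_of_real (b.vv i)) i) = sg (y i)"
      using sg_pos_real[OF b.vv_pos[OF i] sg_norm[OF a.PV_nz[OF y i]]] i by simp
    have r2: "sg ((\<lambda>i\<in>{1..n}. sg (z i) * complex_of_real (b.vv i)) i) = sg (z i)"
      using sg_pos_real[OF b.vv_pos[OF i] sg_norm[OF a.PV_nz[OF z i]]] i by simp
    show "sg ((\<lambda>i\<in>{1..n}. sg (y i) * sg (z i) * a.vvc i) i) * complex_of_real (b.vv i) =
      sg ((\<lambda>i\<in>{1..n}. sg (y i) * complex_of_real (b.vv i)) i) *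
      sg ((\<lambda>i\<in>{1..n}. sg (z i) * complex_of_real (b.vv i)) i) * b.vvc i"
      using l r1 r2 i by (simp add: b.vvc_def)
  qed
  define P where "P = (\<lambda>B k. \<exists>H :: nat \<Rightarrow> (nat \<Rightarrow> complex) set.
      (\<forall>j\<le>k. pv_submodule m n B (H j)) \<and> (\<forall>j<k. H j \<subset> H (Suc j)))"
  have sdA: "stab_dim m n A = Greatest (P A)" and sdB: "stab_dim m n Ahat = Greatest (P Ahat)"
    by (simp_all add: stab_dim_def P_def)
  have bA: "\<And>k. P A k \<Longrightarrow> k \<le> card (PV m n A)" using chain_bound a.PV_finite unfolding P_def by blast
  have bB: "\<And>k. P Ahat k \<Longrightarrow> k \<le> card (PV m n Ahat)" using chain_bound b.PV_finite unfolding P_def by blast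
  have P0: "P A 0"
  proof -
    have "pv_op m n A a.vvc a.vvc = a.vvc"
      unfolding pv_op_sg a.vpos_eq
    proof
      fix i show "(\<lambda>i\<in>{1..n}. sg (a.vvc i) * sg (a.vvc i) * a.vvc i) i = a.vvc i"
        by (cases "i \<in> {1..n}") (auto simp: sg_real_pos a.vv_pos a.vvc_def)
    qed
    then have "pv_submodule m n A {vpos m n A}"
      unfolding pv_submodule_def a.vpos_eq using a.vvc_PV by auto
    then show ?thesis unfolding P_def by (intro exI[of _ "\<lambda>_. {vpos m n A}"]) auto
  qed
  have map: "P Ahat k" if PA: "P A k" for k
  proof -
    obtain H where H: "\<forall>j\<le>k. pv_submodule m n A (H j)" "\<forall>j<k. H j \<subset> H (Suc j)"
      using PA unfolding P_def by blast
    have HP: "\<And>j. j \<le> k \<Longrightarrow> H j \<subseteq> PV m n A" using H(1) by (auto simp: pv_submodule_def)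
    have "pv_submodule m n Ahat (\<Phi> ` H j)" if j: "j \<le> k" for j
    proof -
      have s: "pv_submodule m n A (H j)" using H(1) j by blast
      have "\<Phi> ` H j \<subseteq> PV m n Ahat" using HP[OF j] \<Phi>_PV by blast
      moreover have "vpos m n Ahat \<in> \<Phi> ` H j" using s \<Phi>_v by (force simp: pv_submodule_def)
      moreover have "\<forall>y\<in>\<Phi> ` H j. \<forall>z\<in>\<Phi> ` H j. pv_op m n Ahat y z \<in> \<Phi> ` H j"
      proof (intro ballI)
        fix y' z' assume "y' \<in> \<Phi> ` H j" "z' \<in> \<Phi> ` H j"
        then obtain y z where yz: "y \<in> H j" "z \<in> H j" "y' = \<Phi> y" "z' = \<Phi> z" by blast
        have "pv_op m n A y z \<in> H j" using s yz by (auto simp: pv_submodule_def)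
        moreover have "pv_op m n Ahat y' z' = \<Phi> (pv_op m n A y z)"
        proof -
          have yP: "y \<in> PV m n A" "z \<in> PV m n A" using HP[OF j] yz by auto
          show ?thesis using \<Phi>_op[OF yP] yz(3,4) by simp
        qed
        ultimately show "pv_op m n Ahat y' z' \<in> \<Phi> ` H j" by simp
      qed
      ultimately show ?thesis unfolding pv_submodule_def by blast
    qed
    moreover have "\<Phi> ` H j \<subset> \<Phi> ` H (Suc j)" if j: "j < k" for j
      using image_psubset[OF \<Phi>_inj] H(2) j HP[of "Suc j"] by auto
    ultimately show ?thesis unfolding P_def by (intro exI[of _ "\<lambda>j. \<Phi> ` H j"]) auto
  qed
  have "P A (Greatest (P A))" by (rule GreatestI_nat[where P="P A", OF P0 bA])
  then have "P Ahat (stab_dim m n A)" using map sdA by simp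
  then show ?thesis unfolding sdB by (rule Greatest_le_nat[where P="P Ahat", OF _ bB])
qed

theorem theorem3p13:
  fixes m n :: nat and A Ahat :: tensor
  assumes "m \<ge> 2" and "n \<ge> 1"
    and "nonneg_tensor m n A" and "nonneg_tensor m n Ahat"
    and "comb_symmetric m n A" and "comb_symmetric m n Ahat"
    and "weakly_irreducible m n A" and "weakly_irreducible m n Ahat"
    and "sp_le m n Ahat A"
  shows "zm_submodule m n (PS0 m n A) (PS0 m n Ahat)
         \<and> stab_index m n A dvd stab_index m n Ahat
         \<and> stab_dim m n A \<le> stab_dim m n Ahat"
proof -
  have pa: "pt m n A" using assms by (unfold_locales) auto
  have pb: "pt m n Ahat" using assms by (unfold_locales) auto
  show ?thesis using PS0_sub[OF assms(1,2,9)] stab_index_dvd[OF assms(1,2,9)] stab_dim_le[OF pa pb assms(9)]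
    by blast
qed

end
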